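(* Let $(F,\phi):\mathcal A\to\mathcal B$, $(K,\kappa):\mathcal A\to\mathcal D$, $(G,\gamma):\mathcal B\to\mathcal C$, $(H,\eta):\mathcal D\to\mathcal C$ be morphisms of bigroupoids with $(G,\gamma)\circ(F,\phi)=(H,\eta)\circ(K,\kappa)$, where $K$ is a trivial cofibration which is surjective on 0-cells and $G$ is a fibration. Then there is a morphism $(L,\lambda):\mathcal D\to\mathcal B$ with $(L,\lambda)\circ(K,\kappa)=(F,\phi)$ and $(G,\gamma)\circ(L,\lambda)=(H,\eta)$.
   Context: A bigroupoid $\mathcal B$ consists of: a set $\mathcal B_0$ of 0-cells; for each $A,B\in\mathcal B_0$ a groupoid $\mathcal B(A,B)$ whose objects are 1-cells and whose arrows are 2-cells; composition functors $*$; identity 1-cells $1_A$; inversion functors $(-)^*$; and natural isomorphisms $\mathbf a:(h*g)*f\Rightarrow h*(g*f)$, $\mathbf l:1_B*f\Rightarrow f$, $\mathbf r:f*1_A\Rightarrow f$, $\mathbf e:f^**f\Rightarrow 1_A$, $\mathbf i:1_B\Rightarrow f*f^*$, such that the pentagon for $\mathbf a$ commutes, $(\mathrm{id}*\mathbf l)\circ\mathbf a=\mathbf r*\mathrm{id}$, and $\mathbf r_f\circ(\mathrm{id}*\mathbf e_f)\circ\mathbf a\circ(\mathbf i_f*\mathrm{id})=\mathbf l_f$. A morphism $(F,\phi):\mathcal A\to\mathcal B$ consists of a function on 0-cells, functors $F_{A,A'}:\mathcal A(A,A')\to\mathcal B(FA,FA')$ and natural isomorphisms $\phi_{g,f}:Fg*Ff\Rightarrow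 F(g*f)$, $\phi_A:1_{FA}\Rightarrow F1_A$, $\phi_f:(Ff)^*\Rightarrow F(f^* )$ satisfying $F\mathbf a\circ\phi\circ(\phi*\mathrm{id})=\phi\circ(\mathrm{id}*\phi)\circ\mathbf a$, $F\mathbf r\circ\phi\circ(\mathrm{id}*\phi_A)=\mathbf r$, $F\mathbf l\circ\phi\circ(\phi_B*\mathrm{id})=\mathbf l$, $F\mathbf e\circ\phi\circ(\phi_f*\mathrm{id})=\phi_A\circ\mathbf e$, $F\mathbf i\circ\phi_B=\phi\circ(\mathrm{id}*\phi_f)\circ\mathbf i$; composition is $(G,\gamma)\circ(F,\phi)=(GF,G\phi\circ\gamma F)$. Fibration: (1) for every 0-cell $A'$ of $\mathcal A$ and 1-cell $b:B\to FA'$ there is $a:A\to A'$ with $FA=B$, $Fa=b$; (2) for every 1-cell $a'$ and 2-cell $\beta:b\Rightarrow Fa'$ there is $\alpha:a\Rightarrow a'$ with $Fa=b$, $F\alpha=\beta$. Cofibration: injective on 0-cells and each $F_{A,A'}$ injective on objects. Weak equivalence: every 0-cell $B$ of the codomain admits a 1-cell $B\to FA'$ for some 0-cell $A'$, and each $F_{A,A'}$ is an equivalence of categories. A trivial cofibration is a cofibration that is a weak equivalence. *)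

theory Defs
  imports Main
begin

text \<open>The hom-groupoid
  B(X,Y) consists of the 1-cells f with src1 f = X, tgt1 f = Y and the 2-cells
  between them.  vcomp b a is vertical composition (b after a), vid the identity
  2-cell, hcomp1 g f = g * f and hcomp2 the composition functor on 2-cells,
  unit1 X = 1_X, inv1/inv2 the inversion functor, and assoc, lunit, runit,
  ecell, icell the structural isomorphisms a, l, r, e, i.\<close>

record ('o,'a,'c) bigroupoid =
  obj :: "'o set"
  arr1 :: "'a set"
  src1 :: "'a \<Rightarrow> 'o"
  tgt1 :: "'a \<Rightarrow> 'o"
  arr2 :: "'c set"
  dom2 :: "'c \<Rightarrow> 'a"
  cod2 :: "'c \<Rightarrow> 'a"
  vcomp :: "'c \<Rightarrow> 'c \<Rightarrow> 'c"
  vid :: "'a \<Rightarrow> 'c"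
  hcomp1 :: "'a \<Rightarrow> 'a \<Rightarrow> 'a"
  hcomp2 :: "'c \<Rightarrow> 'c \<Rightarrow> 'c"
  unit1 :: "'o \<Rightarrow> 'a"
  inv1 :: "'a \<Rightarrow> 'a"
  inv2 :: "'c \<Rightarrow> 'c"
  assoc :: "'a \<Rightarrow> 'a \<Rightarrow> 'a \<Rightarrow> 'c"
  lunit :: "'a \<Rightarrow> 'c"
  runit :: "'a \<Rightarrow> 'c"
  ecell :: "'a \<Rightarrow> 'c"
  icell :: "'a \<Rightarrow> 'c"

definition cell :: "('o,'a,'c,'z) bigroupoid_scheme \<Rightarrow> 'c \<Rightarrow> 'a \<Rightarrow> 'a \<Rightarrow> bool" where
  "cell B \<alpha> f g \<longleftrightarrow> \<alpha> \<in> arr2 B \<and> dom2 B \<alpha> = f \<and> cod2 B \<alpha> = g"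

definition bigroupoid :: "('o,'a,'c,'z) bigroupoid_scheme \<Rightarrow> bool" where
  "bigroupoid B \<longleftrightarrow>
   \<comment> \<open>typing of 1-cells and 2-cells\<close>
   (\<forall>f\<in>arr1 B. src1 B f \<in> obj B \<and> tgt1 B f \<in> obj B) \<and>
   (\<forall>\<alpha>\<in>arr2 B. dom2 B \<alpha> \<in> arr1 B \<and> cod2 B \<alpha> \<in> arr1 B \<and>
        src1 B (dom2 B \<alpha>) = src1 B (cod2 B \<alpha>) \<and> tgt1 B (dom2 B \<alpha>) = tgt1 B (cod2 B \<alpha>)) \<and>
   \<comment> \<open>each B(X,Y) is a category\<close>
   (\<forall>\<alpha>\<in>arr2 B. \<forall>\<beta>\<in>arr2 B. cod2 B \<alpha> = dom2 B \<beta> \<longrightarrow>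
        cell B (vcomp B \<beta> \<alpha>) (dom2 B \<alpha>) (cod2 B \<beta>)) \<and>
   (\<forall>f\<in>arr1 B. cell B (vid B f) f f) \<and>
   (\<forall>\<alpha>\<in>arr2 B. \<forall>\<beta>\<in>arr2 B. \<forall>\<gamma>\<in>arr2 B. cod2 B \<alpha> = dom2 B \<beta> \<longrightarrow> cod2 B \<beta> = dom2 B \<gamma> \<longrightarrow>
        vcomp B \<gamma> (vcomp B \<beta> \<alpha>) = vcomp B (vcomp B \<gamma> \<beta>) \<alpha>) \<and>
   (\<forall>\<alpha>\<in>arr2 B. vcomp B \<alpha> (vid B (dom2 B \<alpha>)) = \<alpha> \<and> vcomp B (vid B (cod2 B \<alpha>)) \<alpha> = \<alpha>) \<and>
   \<comment> \<open>... and a groupoid\<close>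
   (\<forall>\<alpha>\<in>arr2 B. \<exists>\<beta>. cell B \<beta> (cod2 B \<alpha>) (dom2 B \<alpha>) \<and>
        vcomp B \<beta> \<alpha> = vid B (dom2 B \<alpha>) \<and> vcomp B \<alpha> \<beta> = vid B (cod2 B \<alpha>)) \<and>
   \<comment> \<open>composition functors\<close>
   (\<forall>f\<in>arr1 B. \<forall>g\<in>arr1 B. src1 B g = tgt1 B f \<longrightarrow>
        hcomp1 B g f \<in> arr1 B \<and> src1 B (hcomp1 B g f) = src1 B f \<and> tgt1 B (hcomp1 B g f) = tgt1 B g) \<and>
   (\<forall>\<alpha>\<in>arr2 B. \<forall>\<beta>\<in>arr2 B. src1 B (dom2 B \<beta>) = tgt1 B (dom2 B \<alpha>) \<longrightarrow>
        cell B (hcomp2 B \<beta> \<alpha>) (hcomp1 B (dom2 B \<beta>) (dom2 B \<alpha>)) (hcomp1 B (cod2 B \<beta>) (cod2 B \<alpha>))) \<and>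
   (\<forall>f\<in>arr1 B. \<forall>g\<in>arr1 B. src1 B g = tgt1 B f \<longrightarrow>
        hcomp2 B (vid B g) (vid B f) = vid B (hcomp1 B g f)) \<and>
   (\<forall>\<alpha>\<in>arr2 B. \<forall>\<alpha>'\<in>arr2 B. \<forall>\<beta>\<in>arr2 B. \<forall>\<beta>'\<in>arr2 B.
        cod2 B \<alpha> = dom2 B \<alpha>' \<longrightarrow> cod2 B \<beta> = dom2 B \<beta>' \<longrightarrow> src1 B (dom2 B \<beta>) = tgt1 B (dom2 B \<alpha>) \<longrightarrow>
        hcomp2 B (vcomp B \<beta>' \<beta>) (vcomp B \<alpha>' \<alpha>) = vcomp B (hcomp2 B \<beta>' \<alpha>') (hcomp2 B \<beta> \<alpha>)) \<and>
   \<comment> \<open>identity 1-cells\<close>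
   (\<forall>X\<in>obj B. unit1 B X \<in> arr1 B \<and> src1 B (unit1 B X) = X \<and> tgt1 B (unit1 B X) = X) \<and>
   \<comment> \<open>inversion functors B(X,Y) \<rightarrow> B(Y,X)\<close>
   (\<forall>f\<in>arr1 B. inv1 B f \<in> arr1 B \<and> src1 B (inv1 B f) = tgt1 B f \<and> tgt1 B (inv1 B f) = src1 B f) \<and>
   (\<forall>\<alpha>\<in>arr2 B. cell B (inv2 B \<alpha>) (inv1 B (dom2 B \<alpha>)) (inv1 B (cod2 B \<alpha>))) \<and>
   (\<forall>f\<in>arr1 B. inv2 B (vid B f) = vid B (inv1 B f)) \<and>
   (\<forall>\<alpha>\<in>arr2 B. \<forall>\<beta>\<in>arr2 B. cod2 B \<alpha> = dom2 B \<beta> \<longrightarrow>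
        inv2 B (vcomp B \<beta> \<alpha>) = vcomp B (inv2 B \<beta>) (inv2 B \<alpha>)) \<and>
   \<comment> \<open>associator: (h*g)*f \<Rightarrow> h*(g*f), natural\<close>
   (\<forall>f\<in>arr1 B. \<forall>g\<in>arr1 B. \<forall>h\<in>arr1 B. src1 B g = tgt1 B f \<longrightarrow> src1 B h = tgt1 B g \<longrightarrow>
        cell B (assoc B h g f) (hcomp1 B (hcomp1 B h g) f) (hcomp1 B h (hcomp1 B g f))) \<and>
   (\<forall>\<alpha>\<in>arr2 B. \<forall>\<beta>\<in>arr2 B. \<forall>\<gamma>\<in>arr2 B.
        src1 B (dom2 B \<beta>) = tgt1 B (dom2 B \<alpha>) \<longrightarrow> src1 B (dom2 B \<gamma>) = tgt1 B (dom2 B \<beta>) \<longrightarrow>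
        vcomp B (assoc B (cod2 B \<gamma>) (cod2 B \<beta>) (cod2 B \<alpha>)) (hcomp2 B (hcomp2 B \<gamma> \<beta>) \<alpha>) =
        vcomp B (hcomp2 B \<gamma> (hcomp2 B \<beta> \<alpha>)) (assoc B (dom2 B \<gamma>) (dom2 B \<beta>) (dom2 B \<alpha>))) \<and>
   \<comment> \<open>left unitor 1_Y * f \<Rightarrow> f, natural\<close>
   (\<forall>f\<in>arr1 B. cell B (lunit B f) (hcomp1 B (unit1 B (tgt1 B f)) f) f) \<and>
   (\<forall>\<alpha>\<in>arr2 B. vcomp B (lunit B (cod2 B \<alpha>)) (hcomp2 B (vid B (unit1 B (tgt1 B (dom2 B \<alpha>)))) \<alpha>) =
        vcomp B \<alpha> (lunit B (dom2 B \<alpha>))) \<and>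
   \<comment> \<open>right unitor f * 1_X \<Rightarrow> f, natural\<close>
   (\<forall>f\<in>arr1 B. cell B (runit B f) (hcomp1 B f (unit1 B (src1 B f))) f) \<and>
   (\<forall>\<alpha>\<in>arr2 B. vcomp B (runit B (cod2 B \<alpha>)) (hcomp2 B \<alpha> (vid B (unit1 B (src1 B (dom2 B \<alpha>))))) =
        vcomp B \<alpha> (runit B (dom2 B \<alpha>))) \<and>
   \<comment> \<open>e: f^* * f \<Rightarrow> 1_X, natural\<close>
   (\<forall>f\<in>arr1 B. cell B (ecell B f) (hcomp1 B (inv1 B f) f) (unit1 B (src1 B f))) \<and>
   (\<forall>\<alpha>\<in>arr2 B. vcomp B (ecell B (cod2 B \<alpha>)) (hcomp2 B (inv2 B \<alpha>) \<alpha>) =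
        vcomp B (vid B (unit1 B (src1 B (dom2 B \<alpha>)))) (ecell B (dom2 B \<alpha>))) \<and>
   \<comment> \<open>i: 1_Y \<Rightarrow> f * f^*, natural\<close>
   (\<forall>f\<in>arr1 B. cell B (icell B f) (unit1 B (tgt1 B f)) (hcomp1 B f (inv1 B f))) \<and>
   (\<forall>\<alpha>\<in>arr2 B. vcomp B (icell B (cod2 B \<alpha>)) (vid B (unit1 B (tgt1 B (dom2 B \<alpha>)))) =
        vcomp B (hcomp2 B \<alpha> (inv2 B \<alpha>)) (icell B (dom2 B \<alpha>))) \<and>
   \<comment> \<open>pentagon\<close>
   (\<forall>f\<in>arr1 B. \<forall>g\<in>arr1 B. \<forall>h\<in>arr1 B. \<forall>k\<in>arr1 B.
        src1 B g = tgt1 B f \<longrightarrow> src1 B h = tgt1 B g \<longrightarrow> src1 B k = tgt1 B h \<longrightarrow>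
        vcomp B (assoc B k h (hcomp1 B g f)) (assoc B (hcomp1 B k h) g f) =
        vcomp B (hcomp2 B (vid B k) (assoc B h g f))
          (vcomp B (assoc B k (hcomp1 B h g) f) (hcomp2 B (assoc B k h g) (vid B f)))) \<and>
   \<comment> \<open>(id * l) o a = r * id\<close>
   (\<forall>f\<in>arr1 B. \<forall>g\<in>arr1 B. src1 B g = tgt1 B f \<longrightarrow>
        vcomp B (hcomp2 B (vid B g) (lunit B f)) (assoc B g (unit1 B (tgt1 B f)) f) =
        hcomp2 B (runit B g) (vid B f)) \<and>
   \<comment> \<open>r o (id * e) o a o (i * id) = l\<close>
   (\<forall>f\<in>arr1 B.
        vcomp B (runit B f) (vcomp B (hcomp2 B (vid B f) (ecell B f))
          (vcomp B (assoc B f (inv1 B f) f) (hcomp2 B (icell B f) (vid B f)))) = lunit B f)"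

text \<open>fmap0/fmap1/fmap2 act on 0-, 1-, 2-cells (since hom-groupoids are disjoint,
  one function fmap1/fmap2 encodes the family of functors F_{A,A'}); fcmp g f = phi_{g,f},
  funit A = phi_A, finv f = phi_f.\<close>

record ('o,'a,'c,'p,'b,'d) bimorph =
  fmap0 :: "'o \<Rightarrow> 'p"
  fmap1 :: "'a \<Rightarrow> 'b"
  fmap2 :: "'c \<Rightarrow> 'd"
  fcmp :: "'a \<Rightarrow> 'a \<Rightarrow> 'd"
  funit :: "'o \<Rightarrow> 'd"
  finv :: "'a \<Rightarrow> 'd"

definition bimorphism ::
  "('o,'a,'c,'z) bigroupoid_scheme \<Rightarrow> ('p,'b,'d,'y) bigroupoid_scheme \<Rightarrow>
   ('o,'a,'c,'p,'b,'d) bimorph \<Rightarrow> bool" where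
  "bimorphism A B F \<longleftrightarrow>
   bigroupoid A \<and> bigroupoid B \<and>
   (\<forall>X\<in>obj A. fmap0 F X \<in> obj B) \<and>
   (\<forall>f\<in>arr1 A. fmap1 F f \<in> arr1 B \<and> src1 B (fmap1 F f) = fmap0 F (src1 A f) \<and>
        tgt1 B (fmap1 F f) = fmap0 F (tgt1 A f)) \<and>
   (\<forall>\<alpha>\<in>arr2 A. cell B (fmap2 F \<alpha>) (fmap1 F (dom2 A \<alpha>)) (fmap1 F (cod2 A \<alpha>))) \<and>
   (\<forall>f\<in>arr1 A. fmap2 F (vid A f) = vid B (fmap1 F f)) \<and>
   (\<forall>\<alpha>\<in>arr2 A. \<forall>\<beta>\<in>arr2 A. cod2 A \<alpha> = dom2 A \<beta> \<longrightarrow>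
        fmap2 F (vcomp A \<beta> \<alpha>) = vcomp B (fmap2 F \<beta>) (fmap2 F \<alpha>)) \<and>
   \<comment> \<open>phi_{g,f} : Fg * Ff \<Rightarrow> F(g*f), natural\<close>
   (\<forall>f\<in>arr1 A. \<forall>g\<in>arr1 A. src1 A g = tgt1 A f \<longrightarrow>
        cell B (fcmp F g f) (hcomp1 B (fmap1 F g) (fmap1 F f)) (fmap1 F (hcomp1 A g f))) \<and>
   (\<forall>\<alpha>\<in>arr2 A. \<forall>\<beta>\<in>arr2 A. src1 A (dom2 A \<beta>) = tgt1 A (dom2 A \<alpha>) \<longrightarrow>
        vcomp B (fcmp F (cod2 A \<beta>) (cod2 A \<alpha>)) (hcomp2 B (fmap2 F \<beta>) (fmap2 F \<alpha>)) =
        vcomp B (fmap2 F (hcomp2 A \<beta> \<alpha>)) (fcmp F (dom2 A \<beta>) (dom2 A \<alpha>))) \<and>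
   \<comment> \<open>phi_X : 1_{FX} \<Rightarrow> F 1_X\<close>
   (\<forall>X\<in>obj A. cell B (funit F X) (unit1 B (fmap0 F X)) (fmap1 F (unit1 A X))) \<and>
   \<comment> \<open>phi_f : (Ff)^* \<Rightarrow> F(f^*), natural\<close>
   (\<forall>f\<in>arr1 A. cell B (finv F f) (inv1 B (fmap1 F f)) (fmap1 F (inv1 A f))) \<and>
   (\<forall>\<alpha>\<in>arr2 A. vcomp B (finv F (cod2 A \<alpha>)) (inv2 B (fmap2 F \<alpha>)) =
        vcomp B (fmap2 F (inv2 A \<alpha>)) (finv F (dom2 A \<alpha>))) \<and>
   \<comment> \<open>F a o phi o (phi * id) = phi o (id * phi) o a\<close>
   (\<forall>f\<in>arr1 A. \<forall>g\<in>arr1 A. \<forall>h\<in>arr1 A. src1 A g = tgt1 A f \<longrightarrow> src1 A h = tgt1 A g \<longrightarrow>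
        vcomp B (fmap2 F (assoc A h g f))
          (vcomp B (fcmp F (hcomp1 A h g) f) (hcomp2 B (fcmp F h g) (vid B (fmap1 F f)))) =
        vcomp B (fcmp F h (hcomp1 A g f))
          (vcomp B (hcomp2 B (vid B (fmap1 F h)) (fcmp F g f))
            (assoc B (fmap1 F h) (fmap1 F g) (fmap1 F f)))) \<and>
   \<comment> \<open>F r o phi o (id * phi_X) = r\<close>
   (\<forall>f\<in>arr1 A.
        vcomp B (fmap2 F (runit A f))
          (vcomp B (fcmp F f (unit1 A (src1 A f))) (hcomp2 B (vid B (fmap1 F f)) (funit F (src1 A f)))) =
        runit B (fmap1 F f)) \<and>
   \<comment> \<open>F l o phi o (phi_Y * id) = l\<close>
   (\<forall>f\<in>arr1 A.
        vcomp B (fmap2 F (lunit A f))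
          (vcomp B (fcmp F (unit1 A (tgt1 A f)) f) (hcomp2 B (funit F (tgt1 A f)) (vid B (fmap1 F f)))) =
        lunit B (fmap1 F f)) \<and>
   \<comment> \<open>F e o phi o (phi_f * id) = phi_X o e\<close>
   (\<forall>f\<in>arr1 A.
        vcomp B (fmap2 F (ecell A f))
          (vcomp B (fcmp F (inv1 A f) f) (hcomp2 B (finv F f) (vid B (fmap1 F f)))) =
        vcomp B (funit F (src1 A f)) (ecell B (fmap1 F f))) \<and>
   \<comment> \<open>F i o phi_Y = phi o (id * phi_f) o i\<close>
   (\<forall>f\<in>arr1 A.
        vcomp B (fmap2 F (icell A f)) (funit F (tgt1 A f)) =
        vcomp B (fcmp F f (inv1 A f))
          (vcomp B (hcomp2 B (vid B (fmap1 F f)) (finv F f)) (icell B (fmap1 F f))))"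

text \<open>Composition (G,gamma) o (F,phi) = (GF, G phi o gamma F); it needs the vertical
  composition of the codomain C.\<close>
definition bm_comp ::
  "('q,'e,'g,'x) bigroupoid_scheme \<Rightarrow> ('p,'b,'d,'q,'e,'g) bimorph \<Rightarrow>
   ('o,'a,'c,'p,'b,'d) bimorph \<Rightarrow> ('o,'a,'c,'q,'e,'g) bimorph" where
  "bm_comp C G F =
   \<lparr> fmap0 = fmap0 G \<circ> fmap0 F,
     fmap1 = fmap1 G \<circ> fmap1 F,
     fmap2 = fmap2 G \<circ> fmap2 F,
     fcmp = (\<lambda>g f. vcomp C (fmap2 G (fcmp F g f)) (fcmp G (fmap1 F g) (fmap1 F f))),
     funit = (\<lambda>X. vcomp C (fmap2 G (funit F X)) (funit G (fmap0 F X))),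
     finv = (\<lambda>f. vcomp C (fmap2 G (finv F f)) (finv G (fmap1 F f))) \<rparr>"

text \<open>Equality of morphisms with domain A: all data agree on the cells of A
  (HOL functions are unconstrained outside the carriers).\<close>
definition bm_eq ::
  "('o,'a,'c,'z) bigroupoid_scheme \<Rightarrow> ('o,'a,'c,'p,'b,'d) bimorph \<Rightarrow>
   ('o,'a,'c,'p,'b,'d) bimorph \<Rightarrow> bool" where
  "bm_eq A F F' \<longleftrightarrow>
   (\<forall>X\<in>obj A. fmap0 F X = fmap0 F' X) \<and>
   (\<forall>f\<in>arr1 A. fmap1 F f = fmap1 F' f) \<and>
   (\<forall>\<alpha>\<in>arr2 A. fmap2 F \<alpha> = fmap2 F' \<alpha>) \<and>
   (\<forall>f\<in>arr1 A. \<forall>g\<in>arr1 A. src1 A g = tgt1 A f \<longrightarrow> fcmp F g f = fcmp F' g f) \<and>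
   (\<forall>X\<in>obj A. funit F X = funit F' X) \<and>
   (\<forall>f\<in>arr1 A. finv F f = finv F' f)"

record ('x,'y) cat =
  cob :: "'x set"
  car :: "'y set"
  cdom :: "'y \<Rightarrow> 'x"
  ccod :: "'y \<Rightarrow> 'x"
  ccomp :: "'y \<Rightarrow> 'y \<Rightarrow> 'y"
  cid :: "'x \<Rightarrow> 'y"

definition cfunctor :: "('x,'y) cat \<Rightarrow> ('u,'v) cat \<Rightarrow> ('x \<Rightarrow> 'u) \<Rightarrow> ('y \<Rightarrow> 'v) \<Rightarrow> bool" where
  "cfunctor C D Fo Fa \<longleftrightarrow>
   (\<forall>x\<in>cob C. Fo x \<in> cob D) \<and>
   (\<forall>f\<in>car C. Fa f \<in> car D \<and> cdom D (Fa f) = Fo (cdom C f) \<and> ccod D (Fa f) = Fo (ccod C f)) \<and>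
   (\<forall>x\<in>cob C. Fa (cid C x) = cid D (Fo x)) \<and>
   (\<forall>f\<in>car C. \<forall>g\<in>car C. ccod C f = cdom C g \<longrightarrow> Fa (ccomp C g f) = ccomp D (Fa g) (Fa f))"

definition ciso :: "('x,'y) cat \<Rightarrow> 'y \<Rightarrow> bool" where
  "ciso C f \<longleftrightarrow> f \<in> car C \<and> (\<exists>g\<in>car C. cdom C g = ccod C f \<and> ccod C g = cdom C f \<and>
      ccomp C g f = cid C (cdom C f) \<and> ccomp C f g = cid C (ccod C f))"

definition cnat_iso :: "('x,'y) cat \<Rightarrow> ('u,'v) cat \<Rightarrow> ('x \<Rightarrow> 'u) \<Rightarrow> ('y \<Rightarrow> 'v) \<Rightarrow>
    ('x \<Rightarrow> 'u) \<Rightarrow> ('y \<Rightarrow> 'v) \<Rightarrow> ('x \<Rightarrow> 'v) \<Rightarrow> bool" where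
  "cnat_iso C D Fo Fa Go Ga \<tau> \<longleftrightarrow>
   (\<forall>x\<in>cob C. \<tau> x \<in> car D \<and> cdom D (\<tau> x) = Fo x \<and> ccod D (\<tau> x) = Go x \<and> ciso D (\<tau> x)) \<and>
   (\<forall>f\<in>car C. ccomp D (\<tau> (ccod C f)) (Fa f) = ccomp D (Ga f) (\<tau> (cdom C f)))"

definition cequivalence :: "('x,'y) cat \<Rightarrow> ('u,'v) cat \<Rightarrow> ('x \<Rightarrow> 'u) \<Rightarrow> ('y \<Rightarrow> 'v) \<Rightarrow> bool" where
  "cequivalence C D Fo Fa \<longleftrightarrow> cfunctor C D Fo Fa \<and>
   (\<exists>Go Ga \<eta> \<epsilon>. cfunctor D C Go Ga \<and>
      cnat_iso C C id id (Go \<circ> Fo) (Ga \<circ> Fa) \<eta> \<and>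
      cnat_iso D D (Fo \<circ> Go) (Fa \<circ> Ga) id id \<epsilon>)"

definition hom_cat :: "('o,'a,'c,'z) bigroupoid_scheme \<Rightarrow> 'o \<Rightarrow> 'o \<Rightarrow> ('a,'c) cat" where
  "hom_cat B X Y =
   \<lparr> cob = {f\<in>arr1 B. src1 B f = X \<and> tgt1 B f = Y},
     car = {\<alpha>\<in>arr2 B. src1 B (dom2 B \<alpha>) = X \<and> tgt1 B (dom2 B \<alpha>) = Y},
     cdom = dom2 B, ccod = cod2 B, ccomp = vcomp B, cid = vid B \<rparr>"

definition fibration ::
  "('o,'a,'c,'z) bigroupoid_scheme \<Rightarrow> ('p,'b,'d,'y) bigroupoid_scheme \<Rightarrow>
   ('o,'a,'c,'p,'b,'d) bimorph \<Rightarrow> bool" where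
  "fibration A B F \<longleftrightarrow>
   (\<forall>X'\<in>obj A. \<forall>b\<in>arr1 B. tgt1 B b = fmap0 F X' \<longrightarrow>
      (\<exists>a\<in>arr1 A. tgt1 A a = X' \<and> fmap0 F (src1 A a) = src1 B b \<and> fmap1 F a = b)) \<and>
   (\<forall>a'\<in>arr1 A. \<forall>\<beta>\<in>arr2 B. cod2 B \<beta> = fmap1 F a' \<longrightarrow>
      (\<exists>\<alpha>\<in>arr2 A. cod2 A \<alpha> = a' \<and> fmap1 F (dom2 A \<alpha>) = dom2 B \<beta> \<and> fmap2 F \<alpha> = \<beta>))"

definition cofibration ::
  "('o,'a,'c,'z) bigroupoid_scheme \<Rightarrow> ('p,'b,'d,'y) bigroupoid_scheme \<Rightarrow>
   ('o,'a,'c,'p,'b,'d) bimorph \<Rightarrow> bool" where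
  "cofibration A B F \<longleftrightarrow>
   inj_on (fmap0 F) (obj A) \<and>
   (\<forall>X\<in>obj A. \<forall>Y\<in>obj A. inj_on (fmap1 F) (cob (hom_cat A X Y)))"

definition weak_equivalence ::
  "('o,'a,'c,'z) bigroupoid_scheme \<Rightarrow> ('p,'b,'d,'y) bigroupoid_scheme \<Rightarrow>
   ('o,'a,'c,'p,'b,'d) bimorph \<Rightarrow> bool" where
  "weak_equivalence A B F \<longleftrightarrow>
   (\<forall>Y\<in>obj B. \<exists>X'\<in>obj A. \<exists>b\<in>arr1 B. src1 B b = Y \<and> tgt1 B b = fmap0 F X') \<and>
   (\<forall>X\<in>obj A. \<forall>X'\<in>obj A.
      cequivalence (hom_cat A X X') (hom_cat B (fmap0 F X) (fmap0 F X')) (fmap1 F) (fmap2 F))"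

definition trivial_cofibration ::
  "('o,'a,'c,'z) bigroupoid_scheme \<Rightarrow> ('p,'b,'d,'y) bigroupoid_scheme \<Rightarrow>
   ('o,'a,'c,'p,'b,'d) bimorph \<Rightarrow> bool" where
  "trivial_cofibration A B F \<longleftrightarrow> cofibration A B F \<and> weak_equivalence A B F"

end

theory Submission
  imports Defs
begin

definition vinv :: "('o,'a,'c,'z) bigroupoid_scheme \<Rightarrow> 'c \<Rightarrow> 'c" where
  "vinv B \<alpha> = (SOME \<beta>. cell B \<beta> (cod2 B \<alpha>) (dom2 B \<alpha>) \<and>
        vcomp B \<beta> \<alpha> = vid B (dom2 B \<alpha>) \<and> vcomp B \<alpha> \<beta> = vid B (cod2 B \<alpha>))"

locale bg =
  fixes B :: "('o,'a,'c,'z) bigroupoid_scheme"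
  assumes bg: "bigroupoid B"
begin

lemmas ax = bg[unfolded bigroupoid_def cell_def]
lemmas c1 = ax[THEN conjunct1]
lemmas c2 = ax[THEN conjunct2, THEN conjunct1]
lemmas c3 = ax[THEN conjunct2, THEN conjunct2, THEN conjunct1]
lemmas c4 = ax[THEN conjunct2, THEN conjunct2, THEN conjunct2, THEN conjunct1]
lemmas c5 = ax[THEN conjunct2, THEN conjunct2, THEN conjunct2, THEN conjunct2, THEN conjunct1]
lemmas c6 = ax[THEN conjunct2, THEN conjunct2, THEN conjunct2, THEN conjunct2, THEN conjunct2, THEN conjunct1]
lemmas c7 = ax[THEN conjunct2, THEN conjunct2, THEN conjunct2, THEN conjunct2, THEN conjunct2, THEN conjunct2, THEN conjunct1]
lemmas c8 = ax[THEN conjunct2, THEN conjunct2, THEN conjunct2, THEN conjunct2, THEN conjunct2, THEN conjunct2, THEN conjunct2, THEN conjunct1]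
lemmas c9 = ax[THEN conjunct2, THEN conjunct2, THEN conjunct2, THEN conjunct2, THEN conjunct2, THEN conjunct2, THEN conjunct2, THEN conjunct2, THEN conjunct1]
lemmas c10 = ax[THEN conjunct2, THEN conjunct2, THEN conjunct2, THEN conjunct2, THEN conjunct2, THEN conjunct2, THEN conjunct2, THEN conjunct2, THEN conjunct2, THEN conjunct1]
lemmas c11 = ax[THEN conjunct2, THEN conjunct2, THEN conjunct2, THEN conjunct2, THEN conjunct2, THEN conjunct2, THEN conjunct2, THEN conjunct2, THEN conjunct2, THEN conjunct2, THEN conjunct1]
lemmas c12 = ax[THEN conjunct2, THEN conjunct2, THEN conjunct2, THEN conjunct2, THEN conjunct2, THEN conjunct2, THEN conjunct2, THEN conjunct2, THEN conjunct2, THEN conjunct2, THEN conjunct2, THEN conjunct1]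
lemmas c13 = ax[THEN conjunct2, THEN conjunct2, THEN conjunct2, THEN conjunct2, THEN conjunct2, THEN conjunct2, THEN conjunct2, THEN conjunct2, THEN conjunct2, THEN conjunct2, THEN conjunct2, THEN conjunct2, THEN conjunct1]
lemmas c14 = ax[THEN conjunct2, THEN conjunct2, THEN conjunct2, THEN conjunct2, THEN conjunct2, THEN conjunct2, THEN conjunct2, THEN conjunct2, THEN conjunct2, THEN conjunct2, THEN conjunct2, THEN conjunct2, THEN conjunct2, THEN conjunct1]
lemmas c15 = ax[THEN conjunct2, THEN conjunct2, THEN conjunct2, THEN conjunct2, THEN conjunct2, THEN conjunct2, THEN conjunct2, THEN conjunct2, THEN conjunct2, THEN conjunct2, THEN conjunct2, THEN conjunct2, THEN conjunct2, THEN conjunct2, THEN conjunct1]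
lemmas c16 = ax[THEN conjunct2, THEN conjunct2, THEN conjunct2, THEN conjunct2, THEN conjunct2, THEN conjunct2, THEN conjunct2, THEN conjunct2, THEN conjunct2, THEN conjunct2, THEN conjunct2, THEN conjunct2, THEN conjunct2, THEN conjunct2, THEN conjunct2, THEN conjunct1]
lemmas c17 = ax[THEN conjunct2, THEN conjunct2, THEN conjunct2, THEN conjunct2, THEN conjunct2, THEN conjunct2, THEN conjunct2, THEN conjunct2, THEN conjunct2, THEN conjunct2, THEN conjunct2, THEN conjunct2, THEN conjunct2, THEN conjunct2, THEN conjunct2, THEN conjunct2, THEN conjunct1]
lemmas c18 = ax[THEN conjunct2, THEN conjunct2, THEN conjunct2, THEN conjunct2, THEN conjunct2, THEN conjunct2, THEN conjunct2, THEN conjunct2, THEN conjunct2, THEN conjunct2, THEN conjunct2, THEN conjunct2, THEN conjunct2, THEN conjunct2, THEN conjunct2, THEN conjunct2, THEN conjunct2, THEN conjunct1]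
lemmas c19 = ax[THEN conjunct2, THEN conjunct2, THEN conjunct2, THEN conjunct2, THEN conjunct2, THEN conjunct2, THEN conjunct2, THEN conjunct2, THEN conjunct2, THEN conjunct2, THEN conjunct2, THEN conjunct2, THEN conjunct2, THEN conjunct2, THEN conjunct2, THEN conjunct2, THEN conjunct2, THEN conjunct2, THEN conjunct1]
lemmas c20 = ax[THEN conjunct2, THEN conjunct2, THEN conjunct2, THEN conjunct2, THEN conjunct2, THEN conjunct2, THEN conjunct2, THEN conjunct2, THEN conjunct2, THEN conjunct2, THEN conjunct2, THEN conjunct2, THEN conjunct2, THEN conjunct2, THEN conjunct2, THEN conjunct2, THEN conjunct2, THEN conjunct2, THEN conjunct2, THEN conjunct1]
lemmas c21 = ax[THEN conjunct2, THEN conjunct2, THEN conjunct2, THEN conjunct2, THEN conjunct2, THEN conjunct2, THEN conjunct2, THEN conjunct2, THEN conjunct2, THEN conjunct2, THEN conjunct2, THEN conjunct2, THEN conjunct2, THEN conjunct2, THEN conjunct2, THEN conjunct2, THEN conjunct2, THEN conjunct2, THEN conjunct2, THEN conjunct2, THEN conjunct1]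
lemmas c22 = ax[THEN conjunct2, THEN conjunct2, THEN conjunct2, THEN conjunct2, THEN conjunct2, THEN conjunct2, THEN conjunct2, THEN conjunct2, THEN conjunct2, THEN conjunct2, THEN conjunct2, THEN conjunct2, THEN conjunct2, THEN conjunct2, THEN conjunct2, THEN conjunct2, THEN conjunct2, THEN conjunct2, THEN conjunct2, THEN conjunct2, THEN conjunct2, THEN conjunct1]
lemmas c23 = ax[THEN conjunct2, THEN conjunct2, THEN conjunct2, THEN conjunct2, THEN conjunct2, THEN conjunct2, THEN conjunct2, THEN conjunct2, THEN conjunct2, THEN conjunct2, THEN conjunct2, THEN conjunct2, THEN conjunct2, THEN conjunct2, THEN conjunct2, THEN conjunct2, THEN conjunct2, THEN conjunct2, THEN conjunct2, THEN conjunct2, THEN conjunct2, THEN conjunct2, THEN conjunct1]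
lemmas c24 = ax[THEN conjunct2, THEN conjunct2, THEN conjunct2, THEN conjunct2, THEN conjunct2, THEN conjunct2, THEN conjunct2, THEN conjunct2, THEN conjunct2, THEN conjunct2, THEN conjunct2, THEN conjunct2, THEN conjunct2, THEN conjunct2, THEN conjunct2, THEN conjunct2, THEN conjunct2, THEN conjunct2, THEN conjunct2, THEN conjunct2, THEN conjunct2, THEN conjunct2, THEN conjunct2, THEN conjunct1]
lemmas c25 = ax[THEN conjunct2, THEN conjunct2, THEN conjunct2, THEN conjunct2, THEN conjunct2, THEN conjunct2, THEN conjunct2, THEN conjunct2, THEN conjunct2, THEN conjunct2, THEN conjunct2, THEN conjunct2, THEN conjunct2, THEN conjunct2, THEN conjunct2, THEN conjunct2, THEN conjunct2, THEN conjunct2, THEN conjunct2, THEN conjunct2, THEN conjunct2, THEN conjunct2, THEN conjunct2, THEN conjunct2, THEN conjunct1]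
lemmas c26 = ax[THEN conjunct2, THEN conjunct2, THEN conjunct2, THEN conjunct2, THEN conjunct2, THEN conjunct2, THEN conjunct2, THEN conjunct2, THEN conjunct2, THEN conjunct2, THEN conjunct2, THEN conjunct2, THEN conjunct2, THEN conjunct2, THEN conjunct2, THEN conjunct2, THEN conjunct2, THEN conjunct2, THEN conjunct2, THEN conjunct2, THEN conjunct2, THEN conjunct2, THEN conjunct2, THEN conjunct2, THEN conjunct2, THEN conjunct1]
lemmas c27 = ax[THEN conjunct2, THEN conjunct2, THEN conjunct2, THEN conjunct2, THEN conjunct2, THEN conjunct2, THEN conjunct2, THEN conjunct2, THEN conjunct2, THEN conjunct2, THEN conjunct2, THEN conjunct2, THEN conjunct2, THEN conjunct2, THEN conjunct2, THEN conjunct2, THEN conjunct2, THEN conjunct2, THEN conjunct2, THEN conjunct2, THEN conjunct2, THEN conjunct2, THEN conjunct2, THEN conjunct2, THEN conjunct2, THEN conjunct2, THEN conjunct1]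
lemmas c28 = ax[THEN conjunct2, THEN conjunct2, THEN conjunct2, THEN conjunct2, THEN conjunct2, THEN conjunct2, THEN conjunct2, THEN conjunct2, THEN conjunct2, THEN conjunct2, THEN conjunct2, THEN conjunct2, THEN conjunct2, THEN conjunct2, THEN conjunct2, THEN conjunct2, THEN conjunct2, THEN conjunct2, THEN conjunct2, THEN conjunct2, THEN conjunct2, THEN conjunct2, THEN conjunct2, THEN conjunct2, THEN conjunct2, THEN conjunct2, THEN conjunct2, THEN conjunct1]
lemmas c29 = ax[THEN conjunct2, THEN conjunct2, THEN conjunct2, THEN conjunct2, THEN conjunct2, THEN conjunct2, THEN conjunct2, THEN conjunct2, THEN conjunct2, THEN conjunct2, THEN conjunct2, THEN conjunct2, THEN conjunct2, THEN conjunct2, THEN conjunct2, THEN conjunct2, THEN conjunct2, THEN conjunct2, THEN conjunct2, THEN conjunct2, THEN conjunct2, THEN conjunct2, THEN conjunct2, THEN conjunct2, THEN conjunct2, THEN conjunct2, THEN conjunct2, THEN conjunct2]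

lemma src_obj[simp]: "f \<in> arr1 B \<Longrightarrow> src1 B f \<in> obj B" using c1 by metis
lemma tgt_obj[simp]: "f \<in> arr1 B \<Longrightarrow> tgt1 B f \<in> obj B" using c1 by metis
lemma dom_arr[simp]: "\<alpha> \<in> arr2 B \<Longrightarrow> dom2 B \<alpha> \<in> arr1 B" using c2 by metis
lemma cod_arr[simp]: "\<alpha> \<in> arr2 B \<Longrightarrow> cod2 B \<alpha> \<in> arr1 B" using c2 by metis
lemma src_cod[simp]: "\<alpha> \<in> arr2 B \<Longrightarrow> src1 B (cod2 B \<alpha>) = src1 B (dom2 B \<alpha>)" using c2 by metis
lemma tgt_cod[simp]: "\<alpha> \<in> arr2 B \<Longrightarrow> tgt1 B (cod2 B \<alpha>) = tgt1 B (dom2 B \<alpha>)" using c2 by metis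

lemma vcomp_arr[simp]: "\<alpha> \<in> arr2 B \<Longrightarrow> \<beta> \<in> arr2 B \<Longrightarrow> cod2 B \<alpha> = dom2 B \<beta> \<Longrightarrow> vcomp B \<beta> \<alpha> \<in> arr2 B"
  using c3 by metis
lemma vcomp_dom[simp]: "\<alpha> \<in> arr2 B \<Longrightarrow> \<beta> \<in> arr2 B \<Longrightarrow> cod2 B \<alpha> = dom2 B \<beta> \<Longrightarrow> dom2 B (vcomp B \<beta> \<alpha>) = dom2 B \<alpha>"
  using c3 by metis
lemma vcomp_cod[simp]: "\<alpha> \<in> arr2 B \<Longrightarrow> \<beta> \<in> arr2 B \<Longrightarrow> cod2 B \<alpha> = dom2 B \<beta> \<Longrightarrow> cod2 B (vcomp B \<beta> \<alpha>) = cod2 B \<beta>"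
  using c3 by metis
lemma vid_arr[simp]: "f \<in> arr1 B \<Longrightarrow> vid B f \<in> arr2 B" using c4 by metis
lemma vid_dom[simp]: "f \<in> arr1 B \<Longrightarrow> dom2 B (vid B f) = f" using c4 by metis
lemma vid_cod[simp]: "f \<in> arr1 B \<Longrightarrow> cod2 B (vid B f) = f" using c4 by metis
lemma vassoc: "\<alpha> \<in> arr2 B \<Longrightarrow> \<beta> \<in> arr2 B \<Longrightarrow> \<gamma> \<in> arr2 B \<Longrightarrow> cod2 B \<alpha> = dom2 B \<beta> \<Longrightarrow> cod2 B \<beta> = dom2 B \<gamma> \<Longrightarrow>
        vcomp B (vcomp B \<gamma> \<beta>) \<alpha> = vcomp B \<gamma> (vcomp B \<beta> \<alpha>)"
  using c5 by metis
lemma vid_r[simp]: "\<alpha> \<in> arr2 B \<Longrightarrow> f = dom2 B \<alpha> \<Longrightarrow> vcomp B \<alpha> (vid B f) = \<alpha>" using c6 by metis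
lemma vid_l[simp]: "\<alpha> \<in> arr2 B \<Longrightarrow> f = cod2 B \<alpha> \<Longrightarrow> vcomp B (vid B f) \<alpha> = \<alpha>" using c6 by metis
lemma has_inv: "\<alpha> \<in> arr2 B \<Longrightarrow> \<exists>\<beta>. cell B \<beta> (cod2 B \<alpha>) (dom2 B \<alpha>) \<and>
        vcomp B \<beta> \<alpha> = vid B (dom2 B \<alpha>) \<and> vcomp B \<alpha> \<beta> = vid B (cod2 B \<alpha>)"
  using c7 unfolding cell_def by blast

lemma hcomp1_arr[simp]: "f \<in> arr1 B \<Longrightarrow> g \<in> arr1 B \<Longrightarrow> src1 B g = tgt1 B f \<Longrightarrow> hcomp1 B g f \<in> arr1 B"
  using c8 by metis
lemma hcomp1_src[simp]: "f \<in> arr1 B \<Longrightarrow> g \<in> arr1 B \<Longrightarrow> src1 B g = tgt1 B f \<Longrightarrow> src1 B (hcomp1 B g f) = src1 B f"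
  using c8 by metis
lemma hcomp1_tgt[simp]: "f \<in> arr1 B \<Longrightarrow> g \<in> arr1 B \<Longrightarrow> src1 B g = tgt1 B f \<Longrightarrow> tgt1 B (hcomp1 B g f) = tgt1 B g"
  using c8 by metis
lemma hcomp2_arr[simp]: "\<alpha> \<in> arr2 B \<Longrightarrow> \<beta> \<in> arr2 B \<Longrightarrow> src1 B (dom2 B \<beta>) = tgt1 B (dom2 B \<alpha>) \<Longrightarrow> hcomp2 B \<beta> \<alpha> \<in> arr2 B"
  using c9 by metis
lemma hcomp2_dom[simp]: "\<alpha> \<in> arr2 B \<Longrightarrow> \<beta> \<in> arr2 B \<Longrightarrow> src1 B (dom2 B \<beta>) = tgt1 B (dom2 B \<alpha>) \<Longrightarrow>
   dom2 B (hcomp2 B \<beta> \<alpha>) = hcomp1 B (dom2 B \<beta>) (dom2 B \<alpha>)"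
  using c9 by metis
lemma hcomp2_cod[simp]: "\<alpha> \<in> arr2 B \<Longrightarrow> \<beta> \<in> arr2 B \<Longrightarrow> src1 B (dom2 B \<beta>) = tgt1 B (dom2 B \<alpha>) \<Longrightarrow>
   cod2 B (hcomp2 B \<beta> \<alpha>) = hcomp1 B (cod2 B \<beta>) (cod2 B \<alpha>)"
  using c9 by metis
lemma hcomp2_vid[simp]: "f \<in> arr1 B \<Longrightarrow> g \<in> arr1 B \<Longrightarrow> src1 B g = tgt1 B f \<Longrightarrow>
        hcomp2 B (vid B g) (vid B f) = vid B (hcomp1 B g f)"
  using c10 by metis
lemma interchange: "\<alpha> \<in> arr2 B \<Longrightarrow> \<alpha>' \<in> arr2 B \<Longrightarrow> \<beta> \<in> arr2 B \<Longrightarrow> \<beta>' \<in> arr2 B \<Longrightarrow>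
        cod2 B \<alpha> = dom2 B \<alpha>' \<Longrightarrow> cod2 B \<beta> = dom2 B \<beta>' \<Longrightarrow> src1 B (dom2 B \<beta>) = tgt1 B (dom2 B \<alpha>) \<Longrightarrow>
        hcomp2 B (vcomp B \<beta>' \<beta>) (vcomp B \<alpha>' \<alpha>) = vcomp B (hcomp2 B \<beta>' \<alpha>') (hcomp2 B \<beta> \<alpha>)"
  using c11 by metis
lemma unit_arr[simp]: "X \<in> obj B \<Longrightarrow> unit1 B X \<in> arr1 B" using c12 by metis
lemma unit_src[simp]: "X \<in> obj B \<Longrightarrow> src1 B (unit1 B X) = X" using c12 by metis
lemma unit_tgt[simp]: "X \<in> obj B \<Longrightarrow> tgt1 B (unit1 B X) = X" using c12 by metis
lemma inv1_arr[simp]: "f \<in> arr1 B \<Longrightarrow> inv1 B f \<in> arr1 B" using c13 by metis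
lemma inv1_src[simp]: "f \<in> arr1 B \<Longrightarrow> src1 B (inv1 B f) = tgt1 B f" using c13 by metis
lemma inv1_tgt[simp]: "f \<in> arr1 B \<Longrightarrow> tgt1 B (inv1 B f) = src1 B f" using c13 by metis
lemma inv2_arr[simp]: "\<alpha> \<in> arr2 B \<Longrightarrow> inv2 B \<alpha> \<in> arr2 B" using c14 by metis
lemma inv2_dom[simp]: "\<alpha> \<in> arr2 B \<Longrightarrow> dom2 B (inv2 B \<alpha>) = inv1 B (dom2 B \<alpha>)" using c14 by metis
lemma inv2_cod[simp]: "\<alpha> \<in> arr2 B \<Longrightarrow> cod2 B (inv2 B \<alpha>) = inv1 B (cod2 B \<alpha>)" using c14 by metis
lemma inv2_vid[simp]: "f \<in> arr1 B \<Longrightarrow> inv2 B (vid B f) = vid B (inv1 B f)" using c15 by metis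
lemma inv2_vcomp[simp]: "\<alpha> \<in> arr2 B \<Longrightarrow> \<beta> \<in> arr2 B \<Longrightarrow> cod2 B \<alpha> = dom2 B \<beta> \<Longrightarrow>
        inv2 B (vcomp B \<beta> \<alpha>) = vcomp B (inv2 B \<beta>) (inv2 B \<alpha>)" using c16 by metis

lemma assoc_arr[simp]: "f \<in> arr1 B \<Longrightarrow> g \<in> arr1 B \<Longrightarrow> h \<in> arr1 B \<Longrightarrow> src1 B g = tgt1 B f \<Longrightarrow> src1 B h = tgt1 B g \<Longrightarrow>
   assoc B h g f \<in> arr2 B" using c17 by metis
lemma assoc_dom[simp]: "f \<in> arr1 B \<Longrightarrow> g \<in> arr1 B \<Longrightarrow> h \<in> arr1 B \<Longrightarrow> src1 B g = tgt1 B f \<Longrightarrow> src1 B h = tgt1 B g \<Longrightarrow>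
   dom2 B (assoc B h g f) = hcomp1 B (hcomp1 B h g) f" using c17 by metis
lemma assoc_cod[simp]: "f \<in> arr1 B \<Longrightarrow> g \<in> arr1 B \<Longrightarrow> h \<in> arr1 B \<Longrightarrow> src1 B g = tgt1 B f \<Longrightarrow> src1 B h = tgt1 B g \<Longrightarrow>
   cod2 B (assoc B h g f) = hcomp1 B h (hcomp1 B g f)" using c17 by metis
lemma assoc_nat: "\<alpha> \<in> arr2 B \<Longrightarrow> \<beta> \<in> arr2 B \<Longrightarrow> \<gamma> \<in> arr2 B \<Longrightarrow>
        src1 B (dom2 B \<beta>) = tgt1 B (dom2 B \<alpha>) \<Longrightarrow> src1 B (dom2 B \<gamma>) = tgt1 B (dom2 B \<beta>) \<Longrightarrow>
        vcomp B (assoc B (cod2 B \<gamma>) (cod2 B \<beta>) (cod2 B \<alpha>)) (hcomp2 B (hcomp2 B \<gamma> \<beta>) \<alpha>) =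
        vcomp B (hcomp2 B \<gamma> (hcomp2 B \<beta> \<alpha>)) (assoc B (dom2 B \<gamma>) (dom2 B \<beta>) (dom2 B \<alpha>))"
  using c18 by metis
lemma lunit_arr[simp]: "f \<in> arr1 B \<Longrightarrow> lunit B f \<in> arr2 B" using c19 by metis
lemma lunit_dom[simp]: "f \<in> arr1 B \<Longrightarrow> dom2 B (lunit B f) = hcomp1 B (unit1 B (tgt1 B f)) f" using c19 by metis
lemma lunit_cod[simp]: "f \<in> arr1 B \<Longrightarrow> cod2 B (lunit B f) = f" using c19 by metis
lemma lunit_nat: "\<alpha> \<in> arr2 B \<Longrightarrow> vcomp B (lunit B (cod2 B \<alpha>)) (hcomp2 B (vid B (unit1 B (tgt1 B (dom2 B \<alpha>)))) \<alpha>) =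
        vcomp B \<alpha> (lunit B (dom2 B \<alpha>))" using c20 by metis
lemma runit_arr[simp]: "f \<in> arr1 B \<Longrightarrow> runit B f \<in> arr2 B" using c21 by metis
lemma runit_dom[simp]: "f \<in> arr1 B \<Longrightarrow> dom2 B (runit B f) = hcomp1 B f (unit1 B (src1 B f))" using c21 by metis
lemma runit_cod[simp]: "f \<in> arr1 B \<Longrightarrow> cod2 B (runit B f) = f" using c21 by metis
lemma runit_nat: "\<alpha> \<in> arr2 B \<Longrightarrow> vcomp B (runit B (cod2 B \<alpha>)) (hcomp2 B \<alpha> (vid B (unit1 B (src1 B (dom2 B \<alpha>))))) =
        vcomp B \<alpha> (runit B (dom2 B \<alpha>))" using c22 by metis
lemma ecell_arr[simp]: "f \<in> arr1 B \<Longrightarrow> ecell B f \<in> arr2 B" using c23 by metis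
lemma ecell_dom[simp]: "f \<in> arr1 B \<Longrightarrow> dom2 B (ecell B f) = hcomp1 B (inv1 B f) f" using c23 by metis
lemma ecell_cod[simp]: "f \<in> arr1 B \<Longrightarrow> cod2 B (ecell B f) = unit1 B (src1 B f)" using c23 by metis
lemma ecell_nat: "\<alpha> \<in> arr2 B \<Longrightarrow> vcomp B (ecell B (cod2 B \<alpha>)) (hcomp2 B (inv2 B \<alpha>) \<alpha>) =
        vcomp B (vid B (unit1 B (src1 B (dom2 B \<alpha>)))) (ecell B (dom2 B \<alpha>))" using c24 by metis
lemma icell_arr[simp]: "f \<in> arr1 B \<Longrightarrow> icell B f \<in> arr2 B" using c25 by metis
lemma icell_dom[simp]: "f \<in> arr1 B \<Longrightarrow> dom2 B (icell B f) = unit1 B (tgt1 B f)" using c25 by metis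
lemma icell_cod[simp]: "f \<in> arr1 B \<Longrightarrow> cod2 B (icell B f) = hcomp1 B f (inv1 B f)" using c25 by metis
lemma icell_nat: "\<alpha> \<in> arr2 B \<Longrightarrow> vcomp B (icell B (cod2 B \<alpha>)) (vid B (unit1 B (tgt1 B (dom2 B \<alpha>)))) =
        vcomp B (hcomp2 B \<alpha> (inv2 B \<alpha>)) (icell B (dom2 B \<alpha>))" using c26 by metis


end

context bg begin

declare vassoc[simp]

lemma vinv_props: assumes "\<alpha> \<in> arr2 B"
  shows "cell B (vinv B \<alpha>) (cod2 B \<alpha>) (dom2 B \<alpha>) \<and> vcomp B (vinv B \<alpha>) \<alpha> = vid B (dom2 B \<alpha>) \<and> vcomp B \<alpha> (vinv B \<alpha>) = vid B (cod2 B \<alpha>)"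
  unfolding vinv_def by (rule someI_ex[OF has_inv[OF assms]])
lemma vinv_arr[simp]: "\<alpha> \<in> arr2 B \<Longrightarrow> vinv B \<alpha> \<in> arr2 B" using vinv_props unfolding cell_def by blast
lemma vinv_dom[simp]: "\<alpha> \<in> arr2 B \<Longrightarrow> dom2 B (vinv B \<alpha>) = cod2 B \<alpha>" using vinv_props unfolding cell_def by blast
lemma vinv_cod[simp]: "\<alpha> \<in> arr2 B \<Longrightarrow> cod2 B (vinv B \<alpha>) = dom2 B \<alpha>" using vinv_props unfolding cell_def by blast
lemma vinv_l[simp]: "\<alpha> \<in> arr2 B \<Longrightarrow> vcomp B (vinv B \<alpha>) \<alpha> = vid B (dom2 B \<alpha>)" using vinv_props by blast
lemma vinv_r[simp]: "\<alpha> \<in> arr2 B \<Longrightarrow> vcomp B \<alpha> (vinv B \<alpha>) = vid B (cod2 B \<alpha>)" using vinv_props by blast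

lemma vcancel1[simp]: "\<alpha> \<in> arr2 B \<Longrightarrow> x \<in> arr2 B \<Longrightarrow> cod2 B x = dom2 B \<alpha> \<Longrightarrow> vcomp B (vinv B \<alpha>) (vcomp B \<alpha> x) = x"
  by (metis vassoc vcomp_arr vid_l vinv_arr vinv_dom vinv_l)
lemma vcancel2[simp]: "\<alpha> \<in> arr2 B \<Longrightarrow> x \<in> arr2 B \<Longrightarrow> cod2 B x = cod2 B \<alpha> \<Longrightarrow> vcomp B \<alpha> (vcomp B (vinv B \<alpha>) x) = x"
  by (metis vassoc vinv_arr vinv_cod vinv_dom vinv_r vid_l)

lemma tail: "vcomp B x y = z \<Longrightarrow> x \<in> arr2 B \<Longrightarrow> y \<in> arr2 B \<Longrightarrow> w \<in> arr2 B \<Longrightarrow> cod2 B y = dom2 B x \<Longrightarrow>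
   cod2 B w = dom2 B y \<Longrightarrow> vcomp B x (vcomp B y w) = vcomp B z w"
  using vassoc[of w y x] by simp

lemma vinv_unique: assumes a: "\<alpha> \<in> arr2 B" and b: "\<beta> \<in> arr2 B" and ab: "cod2 B \<alpha> = dom2 B \<beta>"
   and e: "vcomp B \<beta> \<alpha> = vid B (dom2 B \<alpha>)"
  shows "vinv B \<alpha> = \<beta>"
proof -
  have "cod2 B \<beta> = cod2 B (vcomp B \<beta> \<alpha>)" using a b ab by (simp only: vcomp_cod)
  also have "\<dots> = dom2 B \<alpha>" using a e by simp
  finally have c: "cod2 B \<beta> = dom2 B \<alpha>" .
  have "\<beta> = vcomp B \<beta> (vid B (cod2 B \<alpha>))" using b ab by simp
  also have "\<dots> = vcomp B \<beta> (vcomp B \<alpha> (vinv B \<alpha>))" using a by simp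
  also have "\<dots> = vcomp B (vcomp B \<beta> \<alpha>) (vinv B \<alpha>)" using a b ab by (simp only: vassoc vinv_arr vinv_cod)
  also have "\<dots> = vinv B \<alpha>" using a e by (simp del: vassoc)
  finally show ?thesis by (rule sym)
qed

lemma vinv_vinv[simp]: "\<alpha> \<in> arr2 B \<Longrightarrow> vinv B (vinv B \<alpha>) = \<alpha>"
  by (rule vinv_unique) auto
lemma vinv_vid[simp]: "f \<in> arr1 B \<Longrightarrow> vinv B (vid B f) = vid B f"
  by (rule vinv_unique) auto
lemma vinv_vcomp[simp]: "\<alpha> \<in> arr2 B \<Longrightarrow> \<beta> \<in> arr2 B \<Longrightarrow> cod2 B \<alpha> = dom2 B \<beta> \<Longrightarrow>
   vinv B (vcomp B \<beta> \<alpha>) = vcomp B (vinv B \<alpha>) (vinv B \<beta>)"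
  by (rule vinv_unique) auto
lemma vinv_hcomp2[simp]: "\<alpha> \<in> arr2 B \<Longrightarrow> \<beta> \<in> arr2 B \<Longrightarrow> src1 B (dom2 B \<beta>) = tgt1 B (dom2 B \<alpha>) \<Longrightarrow>
   vinv B (hcomp2 B \<beta> \<alpha>) = hcomp2 B (vinv B \<beta>) (vinv B \<alpha>)"
  by (rule vinv_unique) (auto simp: interchange[symmetric])
lemma vinv_inv2: "\<alpha> \<in> arr2 B \<Longrightarrow> vinv B (inv2 B \<alpha>) = inv2 B (vinv B \<alpha>)"
  by (rule vinv_unique) (auto simp: inv2_vcomp[symmetric])

lemma hcomp2_vid_vcomp1: "\<alpha> \<in> arr2 B \<Longrightarrow> \<alpha>' \<in> arr2 B \<Longrightarrow> g \<in> arr1 B \<Longrightarrow> cod2 B \<alpha> = dom2 B \<alpha>' \<Longrightarrow> src1 B g = tgt1 B (dom2 B \<alpha>) \<Longrightarrow>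
   hcomp2 B (vid B g) (vcomp B \<alpha>' \<alpha>) = vcomp B (hcomp2 B (vid B g) \<alpha>') (hcomp2 B (vid B g) \<alpha>)"
  by (metis interchange vid_arr vid_cod vid_dom vid_l)
lemma hcomp2_vid_vcomp2: "\<alpha> \<in> arr2 B \<Longrightarrow> \<alpha>' \<in> arr2 B \<Longrightarrow> f \<in> arr1 B \<Longrightarrow> cod2 B \<alpha> = dom2 B \<alpha>' \<Longrightarrow> src1 B (dom2 B \<alpha>) = tgt1 B f \<Longrightarrow>
   hcomp2 B (vcomp B \<alpha>' \<alpha>) (vid B f) = vcomp B (hcomp2 B \<alpha>' (vid B f)) (hcomp2 B \<alpha> (vid B f))"
  by (metis interchange vid_arr vid_cod vid_dom vid_l)

lemma tail3: "vcomp B x (vcomp B y z) = r \<Longrightarrow> x \<in> arr2 B \<Longrightarrow> y \<in> arr2 B \<Longrightarrow> z \<in> arr2 B \<Longrightarrow> w \<in> arr2 B \<Longrightarrow>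
   cod2 B y = dom2 B x \<Longrightarrow> cod2 B z = dom2 B y \<Longrightarrow>
   cod2 B w = dom2 B z \<Longrightarrow> vcomp B x (vcomp B y (vcomp B z w)) = vcomp B r w"
  by (erule subst) simp

lemma solve: "vcomp B x y = z \<Longrightarrow> x \<in> arr2 B \<Longrightarrow> y \<in> arr2 B \<Longrightarrow> cod2 B y = dom2 B x \<Longrightarrow>
   x = vcomp B z (vinv B y)"
  by (erule subst) simp

lemma cancel_r: "vcomp B x \<alpha> = vcomp B y \<alpha> \<Longrightarrow> x \<in> arr2 B \<Longrightarrow> y \<in> arr2 B \<Longrightarrow> \<alpha> \<in> arr2 B \<Longrightarrow>
   cod2 B \<alpha> = dom2 B x \<Longrightarrow> cod2 B \<alpha> = dom2 B y \<Longrightarrow> x = y"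
  by (metis vcancel2 vassoc vid_r vinv_arr vinv_cod vinv_dom vinv_r)
lemma cancel_l: "vcomp B \<alpha> x = vcomp B \<alpha> y \<Longrightarrow> x \<in> arr2 B \<Longrightarrow> y \<in> arr2 B \<Longrightarrow> \<alpha> \<in> arr2 B \<Longrightarrow>
   cod2 B x = dom2 B \<alpha> \<Longrightarrow> cod2 B y = dom2 B \<alpha> \<Longrightarrow> x = y"
  by (metis vcancel1)

end


locale bm =
  fixes X :: "('o,'a,'c,'z) bigroupoid_scheme" and Y :: "('p,'b,'d,'y) bigroupoid_scheme"
    and F :: "('o,'a,'c,'p,'b,'d) bimorph"
  assumes bm: "bimorphism X Y F"
begin

lemmas ax = bm[unfolded bimorphism_def cell_def]
lemmas c1 = ax[THEN conjunct1]
lemmas c2 = ax[THEN conjunct2, THEN conjunct1]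
lemmas c3 = ax[THEN conjunct2, THEN conjunct2, THEN conjunct1]
lemmas c4 = ax[THEN conjunct2, THEN conjunct2, THEN conjunct2, THEN conjunct1]
lemmas c5 = ax[THEN conjunct2, THEN conjunct2, THEN conjunct2, THEN conjunct2, THEN conjunct1]
lemmas c6 = ax[THEN conjunct2, THEN conjunct2, THEN conjunct2, THEN conjunct2, THEN conjunct2, THEN conjunct1]
lemmas c7 = ax[THEN conjunct2, THEN conjunct2, THEN conjunct2, THEN conjunct2, THEN conjunct2, THEN conjunct2, THEN conjunct1]
lemmas c8 = ax[THEN conjunct2, THEN conjunct2, THEN conjunct2, THEN conjunct2, THEN conjunct2, THEN conjunct2, THEN conjunct2, THEN conjunct1]
lemmas c9 = ax[THEN conjunct2, THEN conjunct2, THEN conjunct2, THEN conjunct2, THEN conjunct2, THEN conjunct2, THEN conjunct2, THEN conjunct2, THEN conjunct1]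
lemmas c10 = ax[THEN conjunct2, THEN conjunct2, THEN conjunct2, THEN conjunct2, THEN conjunct2, THEN conjunct2, THEN conjunct2, THEN conjunct2, THEN conjunct2, THEN conjunct1]
lemmas c11 = ax[THEN conjunct2, THEN conjunct2, THEN conjunct2, THEN conjunct2, THEN conjunct2, THEN conjunct2, THEN conjunct2, THEN conjunct2, THEN conjunct2, THEN conjunct2, THEN conjunct1]
lemmas c12 = ax[THEN conjunct2, THEN conjunct2, THEN conjunct2, THEN conjunct2, THEN conjunct2, THEN conjunct2, THEN conjunct2, THEN conjunct2, THEN conjunct2, THEN conjunct2, THEN conjunct2, THEN conjunct1]
lemmas c13 = ax[THEN conjunct2, THEN conjunct2, THEN conjunct2, THEN conjunct2, THEN conjunct2, THEN conjunct2, THEN conjunct2, THEN conjunct2, THEN conjunct2, THEN conjunct2, THEN conjunct2, THEN conjunct2, THEN conjunct1]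
lemmas c14 = ax[THEN conjunct2, THEN conjunct2, THEN conjunct2, THEN conjunct2, THEN conjunct2, THEN conjunct2, THEN conjunct2, THEN conjunct2, THEN conjunct2, THEN conjunct2, THEN conjunct2, THEN conjunct2, THEN conjunct2, THEN conjunct1]
lemmas c15 = ax[THEN conjunct2, THEN conjunct2, THEN conjunct2, THEN conjunct2, THEN conjunct2, THEN conjunct2, THEN conjunct2, THEN conjunct2, THEN conjunct2, THEN conjunct2, THEN conjunct2, THEN conjunct2, THEN conjunct2, THEN conjunct2, THEN conjunct1]
lemmas c16 = ax[THEN conjunct2, THEN conjunct2, THEN conjunct2, THEN conjunct2, THEN conjunct2, THEN conjunct2, THEN conjunct2, THEN conjunct2, THEN conjunct2, THEN conjunct2, THEN conjunct2, THEN conjunct2, THEN conjunct2, THEN conjunct2, THEN conjunct2, THEN conjunct1]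
lemmas c17 = ax[THEN conjunct2, THEN conjunct2, THEN conjunct2, THEN conjunct2, THEN conjunct2, THEN conjunct2, THEN conjunct2, THEN conjunct2, THEN conjunct2, THEN conjunct2, THEN conjunct2, THEN conjunct2, THEN conjunct2, THEN conjunct2, THEN conjunct2, THEN conjunct2]

sublocale X: bg X using c1 by unfold_locales
sublocale Y: bg Y using c2 by unfold_locales

lemma F0[simp]: "x \<in> obj X \<Longrightarrow> fmap0 F x \<in> obj Y" using c3 by blast
lemma F1_arr[simp]: "f \<in> arr1 X \<Longrightarrow> fmap1 F f \<in> arr1 Y" using c4 by blast
lemma F1_src[simp]: "f \<in> arr1 X \<Longrightarrow> src1 Y (fmap1 F f) = fmap0 F (src1 X f)" using c4 by blast
lemma F1_tgt[simp]: "f \<in> arr1 X \<Longrightarrow> tgt1 Y (fmap1 F f) = fmap0 F (tgt1 X f)" using c4 by blast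
lemma F2_arr[simp]: "\<alpha> \<in> arr2 X \<Longrightarrow> fmap2 F \<alpha> \<in> arr2 Y" using c5 by blast
lemma F2_dom[simp]: "\<alpha> \<in> arr2 X \<Longrightarrow> dom2 Y (fmap2 F \<alpha>) = fmap1 F (dom2 X \<alpha>)" using c5 by blast
lemma F2_cod[simp]: "\<alpha> \<in> arr2 X \<Longrightarrow> cod2 Y (fmap2 F \<alpha>) = fmap1 F (cod2 X \<alpha>)" using c5 by blast
lemma F_vid[simp]: "f \<in> arr1 X \<Longrightarrow> fmap2 F (vid X f) = vid Y (fmap1 F f)" using c6 by blast
lemma F_vcomp[simp]: "\<alpha> \<in> arr2 X \<Longrightarrow> \<beta> \<in> arr2 X \<Longrightarrow> cod2 X \<alpha> = dom2 X \<beta> \<Longrightarrow>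
   fmap2 F (vcomp X \<beta> \<alpha>) = vcomp Y (fmap2 F \<beta>) (fmap2 F \<alpha>)" using c7 by blast
lemma F_vinv[simp]: "\<alpha> \<in> arr2 X \<Longrightarrow> fmap2 F (vinv X \<alpha>) = vinv Y (fmap2 F \<alpha>)"
  by (rule Y.vinv_unique[symmetric]) (auto simp: F_vcomp[symmetric])
lemma cmp_arr[simp]: "f \<in> arr1 X \<Longrightarrow> g \<in> arr1 X \<Longrightarrow> src1 X g = tgt1 X f \<Longrightarrow> fcmp F g f \<in> arr2 Y" using c8 by blast
lemma cmp_dom[simp]: "f \<in> arr1 X \<Longrightarrow> g \<in> arr1 X \<Longrightarrow> src1 X g = tgt1 X f \<Longrightarrow>
   dom2 Y (fcmp F g f) = hcomp1 Y (fmap1 F g) (fmap1 F f)" using c8 by blast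
lemma cmp_cod[simp]: "f \<in> arr1 X \<Longrightarrow> g \<in> arr1 X \<Longrightarrow> src1 X g = tgt1 X f \<Longrightarrow>
   cod2 Y (fcmp F g f) = fmap1 F (hcomp1 X g f)" using c8 by blast
lemma cmp_nat: "\<alpha> \<in> arr2 X \<Longrightarrow> \<beta> \<in> arr2 X \<Longrightarrow> src1 X (dom2 X \<beta>) = tgt1 X (dom2 X \<alpha>) \<Longrightarrow>
        vcomp Y (fcmp F (cod2 X \<beta>) (cod2 X \<alpha>)) (hcomp2 Y (fmap2 F \<beta>) (fmap2 F \<alpha>)) =
        vcomp Y (fmap2 F (hcomp2 X \<beta> \<alpha>)) (fcmp F (dom2 X \<beta>) (dom2 X \<alpha>))" using c9 by blast
lemma unit_arr[simp]: "x \<in> obj X \<Longrightarrow> funit F x \<in> arr2 Y" using c10 by blast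
lemma unit_dom[simp]: "x \<in> obj X \<Longrightarrow> dom2 Y (funit F x) = unit1 Y (fmap0 F x)" using c10 by blast
lemma unit_cod[simp]: "x \<in> obj X \<Longrightarrow> cod2 Y (funit F x) = fmap1 F (unit1 X x)" using c10 by blast
lemma inv_arr[simp]: "f \<in> arr1 X \<Longrightarrow> finv F f \<in> arr2 Y" using c11 by blast
lemma inv_dom[simp]: "f \<in> arr1 X \<Longrightarrow> dom2 Y (finv F f) = inv1 Y (fmap1 F f)" using c11 by blast
lemma inv_cod[simp]: "f \<in> arr1 X \<Longrightarrow> cod2 Y (finv F f) = fmap1 F (inv1 X f)" using c11 by blast
lemma inv_nat: "\<alpha> \<in> arr2 X \<Longrightarrow> vcomp Y (finv F (cod2 X \<alpha>)) (inv2 Y (fmap2 F \<alpha>)) =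
        vcomp Y (fmap2 F (inv2 X \<alpha>)) (finv F (dom2 X \<alpha>))" using c12 by blast
lemma coh_assoc: "f \<in> arr1 X \<Longrightarrow> g \<in> arr1 X \<Longrightarrow> h \<in> arr1 X \<Longrightarrow> src1 X g = tgt1 X f \<Longrightarrow> src1 X h = tgt1 X g \<Longrightarrow>
        vcomp Y (fmap2 F (assoc X h g f))
          (vcomp Y (fcmp F (hcomp1 X h g) f) (hcomp2 Y (fcmp F h g) (vid Y (fmap1 F f)))) =
        vcomp Y (fcmp F h (hcomp1 X g f))
          (vcomp Y (hcomp2 Y (vid Y (fmap1 F h)) (fcmp F g f))
            (assoc Y (fmap1 F h) (fmap1 F g) (fmap1 F f)))" using c13 by blast
lemma coh_runit: "f \<in> arr1 X \<Longrightarrow>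
        vcomp Y (fmap2 F (runit X f))
          (vcomp Y (fcmp F f (unit1 X (src1 X f))) (hcomp2 Y (vid Y (fmap1 F f)) (funit F (src1 X f)))) =
        runit Y (fmap1 F f)" using c14 by blast
lemma coh_lunit: "f \<in> arr1 X \<Longrightarrow>
        vcomp Y (fmap2 F (lunit X f))
          (vcomp Y (fcmp F (unit1 X (tgt1 X f)) f) (hcomp2 Y (funit F (tgt1 X f)) (vid Y (fmap1 F f)))) =
        lunit Y (fmap1 F f)" using c15 by blast
lemma coh_ecell: "f \<in> arr1 X \<Longrightarrow>
        vcomp Y (fmap2 F (ecell X f))
          (vcomp Y (fcmp F (inv1 X f) f) (hcomp2 Y (finv F f) (vid Y (fmap1 F f)))) =
        vcomp Y (funit F (src1 X f)) (ecell Y (fmap1 F f))" using c16 by blast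
lemma coh_icell: "f \<in> arr1 X \<Longrightarrow>
        vcomp Y (fmap2 F (icell X f)) (funit F (tgt1 X f)) =
        vcomp Y (fcmp F f (inv1 X f))
          (vcomp Y (hcomp2 Y (vid Y (fmap1 F f)) (finv F f)) (icell Y (fmap1 F f)))" using c17 by blast
end

locale bmc = F: bm X Y F + G: bm Y Z G
  for X :: "('o,'a,'c,'z) bigroupoid_scheme" and Y :: "('p,'b,'d,'y) bigroupoid_scheme"
    and Z :: "('q,'e,'g,'x) bigroupoid_scheme"
    and F :: "('o,'a,'c,'p,'b,'d) bimorph" and G :: "('p,'b,'d,'q,'e,'g) bimorph"
begin

lemma comp_assoc:
  assumes f: "f \<in> arr1 X" and g: "g \<in> arr1 X" and h: "h \<in> arr1 X"
    and gf: "src1 X g = tgt1 X f" and hg: "src1 X h = tgt1 X g"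
  shows "vcomp Z (fmap2 G (fmap2 F (assoc X h g f)))
          (vcomp Z (vcomp Z (fmap2 G (fcmp F (hcomp1 X h g) f)) (fcmp G (fmap1 F (hcomp1 X h g)) (fmap1 F f)))
             (hcomp2 Z (vcomp Z (fmap2 G (fcmp F h g)) (fcmp G (fmap1 F h) (fmap1 F g))) (vid Z (fmap1 G (fmap1 F f))))) =
        vcomp Z (vcomp Z (fmap2 G (fcmp F h (hcomp1 X g f))) (fcmp G (fmap1 F h) (fmap1 F (hcomp1 X g f))))
          (vcomp Z (hcomp2 Z (vid Z (fmap1 G (fmap1 F h))) (vcomp Z (fmap2 G (fcmp F g f)) (fcmp G (fmap1 F g) (fmap1 F f))))
            (assoc Z (fmap1 G (fmap1 F h)) (fmap1 G (fmap1 F g)) (fmap1 G (fmap1 F f))))"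
proof -
  let ?Ff = "fmap1 F f" and ?Fg = "fmap1 F g" and ?Fh = "fmap1 F h"
  let ?\<phi>1 = "fcmp F (hcomp1 X h g) f" and ?\<gamma>1 = "fcmp G (fmap1 F (hcomp1 X h g)) (fmap1 F f)"
  let ?\<phi>2 = "fcmp F h g" and ?\<gamma>2 = "fcmp G (fmap1 F h) (fmap1 F g)"
  let ?\<phi>3 = "fcmp F h (hcomp1 X g f)" and ?\<gamma>3 = "fcmp G (fmap1 F h) (fmap1 F (hcomp1 X g f))"
  let ?\<phi>4 = "fcmp F g f" and ?\<gamma>4 = "fcmp G (fmap1 F g) (fmap1 F f)"
  let ?\<gamma>' = "fcmp G (hcomp1 Y ?Fh ?Fg) ?Ff" and ?\<gamma>'' = "fcmp G ?Fh (hcomp1 Y ?Fg ?Ff)"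
  have n1: "vcomp Z ?\<gamma>1 (hcomp2 Z (fmap2 G ?\<phi>2) (vid Z (fmap1 G ?Ff))) = vcomp Z (fmap2 G (hcomp2 Y ?\<phi>2 (vid Y ?Ff))) ?\<gamma>'"
    using G.cmp_nat[of "vid Y ?Ff" ?\<phi>2] assms by simp
  have cF: "vcomp Z (fmap2 G (fmap2 F (assoc X h g f))) (vcomp Z (fmap2 G ?\<phi>1) (fmap2 G (hcomp2 Y ?\<phi>2 (vid Y ?Ff))))
     = vcomp Z (fmap2 G ?\<phi>3) (vcomp Z (fmap2 G (hcomp2 Y (vid Y ?Fh) ?\<phi>4)) (fmap2 G (assoc Y ?Fh ?Fg ?Ff)))"
    using arg_cong[OF F.coh_assoc[OF assms], of "fmap2 G"] assms by simp
  have cG: "vcomp Z (fmap2 G (assoc Y ?Fh ?Fg ?Ff)) (vcomp Z ?\<gamma>' (hcomp2 Z ?\<gamma>2 (vid Z (fmap1 G ?Ff))))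
     = vcomp Z ?\<gamma>'' (vcomp Z (hcomp2 Z (vid Z (fmap1 G ?Fh)) ?\<gamma>4) (assoc Z (fmap1 G ?Fh) (fmap1 G ?Fg) (fmap1 G ?Ff)))"
    using G.coh_assoc[of ?Ff ?Fg ?Fh] assms by simp
  have n2: "vcomp Z ?\<gamma>3 (hcomp2 Z (vid Z (fmap1 G ?Fh)) (fmap2 G ?\<phi>4)) = vcomp Z (fmap2 G (hcomp2 Y (vid Y ?Fh) ?\<phi>4)) ?\<gamma>''"
    using G.cmp_nat[of ?\<phi>4 "vid Y ?Fh"] assms by simp
  show ?thesis using assms
    by (simp add: G.Y.hcomp2_vid_vcomp1 G.Y.hcomp2_vid_vcomp2 G.Y.tail[OF n1] G.Y.tail3[OF cF] cG G.Y.tail[OF n2[symmetric]])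
qed

lemma comp_runit:
  assumes f: "f \<in> arr1 X"
  shows "vcomp Z (fmap2 G (fmap2 F (runit X f)))
          (vcomp Z (vcomp Z (fmap2 G (fcmp F f (unit1 X (src1 X f)))) (fcmp G (fmap1 F f) (fmap1 F (unit1 X (src1 X f)))))
            (hcomp2 Z (vid Z (fmap1 G (fmap1 F f))) (vcomp Z (fmap2 G (funit F (src1 X f))) (funit G (fmap0 F (src1 X f)))))) =
        runit Z (fmap1 G (fmap1 F f))"
proof -
  let ?Ff = "fmap1 F f" and ?x = "src1 X f"
  let ?u = "funit F ?x" and ?u' = "funit G (fmap0 F ?x)"
  have n1: "vcomp Z (fcmp G ?Ff (fmap1 F (unit1 X ?x))) (hcomp2 Z (vid Z (fmap1 G ?Ff)) (fmap2 G ?u))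
     = vcomp Z (fmap2 G (hcomp2 Y (vid Y ?Ff) ?u)) (fcmp G ?Ff (unit1 Y (fmap0 F ?x)))"
    using G.cmp_nat[of ?u "vid Y ?Ff"] assms by simp
  have cF: "vcomp Z (fmap2 G (fmap2 F (runit X f))) (vcomp Z (fmap2 G (fcmp F f (unit1 X ?x))) (fmap2 G (hcomp2 Y (vid Y ?Ff) ?u)))
     = fmap2 G (runit Y ?Ff)"
    using arg_cong[OF F.coh_runit[OF assms], of "fmap2 G"] assms by simp
  have cG: "vcomp Z (fmap2 G (runit Y ?Ff)) (vcomp Z (fcmp G ?Ff (unit1 Y (fmap0 F ?x))) (hcomp2 Z (vid Z (fmap1 G ?Ff)) ?u'))
     = runit Z (fmap1 G ?Ff)"
    using G.coh_runit[of ?Ff] assms by simp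
  show ?thesis using assms
    by (simp add: G.Y.hcomp2_vid_vcomp1 G.Y.tail[OF n1] G.Y.tail3[OF cF] cG)
qed

lemma comp_lunit:
  assumes f: "f \<in> arr1 X"
  shows "vcomp Z (fmap2 G (fmap2 F (lunit X f)))
          (vcomp Z (vcomp Z (fmap2 G (fcmp F (unit1 X (tgt1 X f)) f)) (fcmp G (fmap1 F (unit1 X (tgt1 X f))) (fmap1 F f)))
            (hcomp2 Z (vcomp Z (fmap2 G (funit F (tgt1 X f))) (funit G (fmap0 F (tgt1 X f)))) (vid Z (fmap1 G (fmap1 F f))))) =
        lunit Z (fmap1 G (fmap1 F f))"
proof -
  let ?Ff = "fmap1 F f" and ?x = "tgt1 X f"
  let ?u = "funit F ?x" and ?u' = "funit G (fmap0 F ?x)"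
  have n1: "vcomp Z (fcmp G (fmap1 F (unit1 X ?x)) ?Ff) (hcomp2 Z (fmap2 G ?u) (vid Z (fmap1 G ?Ff)))
     = vcomp Z (fmap2 G (hcomp2 Y ?u (vid Y ?Ff))) (fcmp G (unit1 Y (fmap0 F ?x)) ?Ff)"
    using G.cmp_nat[of "vid Y ?Ff" ?u] assms by simp
  have cF: "vcomp Z (fmap2 G (fmap2 F (lunit X f))) (vcomp Z (fmap2 G (fcmp F (unit1 X ?x) f)) (fmap2 G (hcomp2 Y ?u (vid Y ?Ff))))
     = fmap2 G (lunit Y ?Ff)"
    using arg_cong[OF F.coh_lunit[OF assms], of "fmap2 G"] assms by simp
  have cG: "vcomp Z (fmap2 G (lunit Y ?Ff)) (vcomp Z (fcmp G (unit1 Y (fmap0 F ?x)) ?Ff) (hcomp2 Z ?u' (vid Z (fmap1 G ?Ff))))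
     = lunit Z (fmap1 G ?Ff)"
    using G.coh_lunit[of ?Ff] assms by simp
  show ?thesis using assms
    by (simp add: G.Y.hcomp2_vid_vcomp2 G.Y.tail[OF n1] G.Y.tail3[OF cF] cG)
qed

lemma comp_ecell:
  assumes f: "f \<in> arr1 X"
  shows "vcomp Z (fmap2 G (fmap2 F (ecell X f)))
          (vcomp Z (vcomp Z (fmap2 G (fcmp F (inv1 X f) f)) (fcmp G (fmap1 F (inv1 X f)) (fmap1 F f)))
            (hcomp2 Z (vcomp Z (fmap2 G (finv F f)) (finv G (fmap1 F f))) (vid Z (fmap1 G (fmap1 F f))))) =
        vcomp Z (vcomp Z (fmap2 G (funit F (src1 X f))) (funit G (fmap0 F (src1 X f)))) (ecell Z (fmap1 G (fmap1 F f)))"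
proof -
  let ?Ff = "fmap1 F f" and ?x = "src1 X f"
  let ?u = "funit F ?x" and ?u' = "funit G (fmap0 F ?x)"
  have n1: "vcomp Z (fcmp G (fmap1 F (inv1 X f)) ?Ff) (hcomp2 Z (fmap2 G (finv F f)) (vid Z (fmap1 G ?Ff)))
     = vcomp Z (fmap2 G (hcomp2 Y (finv F f) (vid Y ?Ff))) (fcmp G (inv1 Y ?Ff) ?Ff)"
    using G.cmp_nat[of "vid Y ?Ff" "finv F f"] assms by simp
  have cF: "vcomp Z (fmap2 G (fmap2 F (ecell X f))) (vcomp Z (fmap2 G (fcmp F (inv1 X f) f)) (fmap2 G (hcomp2 Y (finv F f) (vid Y ?Ff))))
     = vcomp Z (fmap2 G ?u) (fmap2 G (ecell Y ?Ff))"
    using arg_cong[OF F.coh_ecell[OF assms], of "fmap2 G"] assms by simp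
  have cG: "vcomp Z (fmap2 G (ecell Y ?Ff)) (vcomp Z (fcmp G (inv1 Y ?Ff) ?Ff) (hcomp2 Z (finv G ?Ff) (vid Z (fmap1 G ?Ff))))
     = vcomp Z ?u' (ecell Z (fmap1 G ?Ff))"
    using G.coh_ecell[of ?Ff] assms by simp
  show ?thesis using assms
    by (simp add: G.Y.hcomp2_vid_vcomp2 G.Y.tail[OF n1] G.Y.tail3[OF cF] cG)
qed

lemma comp_icell:
  assumes f: "f \<in> arr1 X"
  shows "vcomp Z (fmap2 G (fmap2 F (icell X f))) (vcomp Z (fmap2 G (funit F (tgt1 X f))) (funit G (fmap0 F (tgt1 X f)))) =
        vcomp Z (vcomp Z (fmap2 G (fcmp F f (inv1 X f))) (fcmp G (fmap1 F f) (fmap1 F (inv1 X f))))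
          (vcomp Z (hcomp2 Z (vid Z (fmap1 G (fmap1 F f))) (vcomp Z (fmap2 G (finv F f)) (finv G (fmap1 F f))))
            (icell Z (fmap1 G (fmap1 F f))))"
proof -
  let ?Ff = "fmap1 F f" and ?x = "tgt1 X f"
  let ?u = "funit F ?x" and ?u' = "funit G (fmap0 F ?x)"
  have n: "vcomp Z (fcmp G ?Ff (fmap1 F (inv1 X f))) (hcomp2 Z (vid Z (fmap1 G ?Ff)) (fmap2 G (finv F f)))
     = vcomp Z (fmap2 G (hcomp2 Y (vid Y ?Ff) (finv F f))) (fcmp G ?Ff (inv1 Y ?Ff))"
    using G.cmp_nat[of "finv F f" "vid Y ?Ff"] assms by simp
  have cF: "vcomp Z (fmap2 G (fmap2 F (icell X f))) (fmap2 G ?u)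
     = vcomp Z (fmap2 G (fcmp F f (inv1 X f))) (vcomp Z (fmap2 G (hcomp2 Y (vid Y ?Ff) (finv F f))) (fmap2 G (icell Y ?Ff)))"
    using arg_cong[OF F.coh_icell[OF assms], of "fmap2 G"] assms by simp
  have cG: "vcomp Z (fmap2 G (icell Y ?Ff)) ?u'
     = vcomp Z (fcmp G ?Ff (inv1 Y ?Ff)) (vcomp Z (hcomp2 Z (vid Z (fmap1 G ?Ff)) (finv G ?Ff)) (icell Z (fmap1 G ?Ff)))"
    using G.coh_icell[of ?Ff] assms by simp
  show ?thesis using assms
    by (simp add: G.Y.hcomp2_vid_vcomp1 G.Y.tail[OF cF] cG G.Y.tail[OF n[symmetric]])
qed

lemma comp_cmp_nat:
  assumes a: "\<alpha> \<in> arr2 X" and b: "\<beta> \<in> arr2 X" and ab: "src1 X (dom2 X \<beta>) = tgt1 X (dom2 X \<alpha>)"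
  shows "vcomp Z (vcomp Z (fmap2 G (fcmp F (cod2 X \<beta>) (cod2 X \<alpha>))) (fcmp G (fmap1 F (cod2 X \<beta>)) (fmap1 F (cod2 X \<alpha>))))
            (hcomp2 Z (fmap2 G (fmap2 F \<beta>)) (fmap2 G (fmap2 F \<alpha>))) =
         vcomp Z (fmap2 G (fmap2 F (hcomp2 X \<beta> \<alpha>)))
            (vcomp Z (fmap2 G (fcmp F (dom2 X \<beta>) (dom2 X \<alpha>))) (fcmp G (fmap1 F (dom2 X \<beta>)) (fmap1 F (dom2 X \<alpha>))))"
proof -
  have nG: "vcomp Z (fcmp G (fmap1 F (cod2 X \<beta>)) (fmap1 F (cod2 X \<alpha>))) (hcomp2 Z (fmap2 G (fmap2 F \<beta>)) (fmap2 G (fmap2 F \<alpha>)))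
     = vcomp Z (fmap2 G (hcomp2 Y (fmap2 F \<beta>) (fmap2 F \<alpha>))) (fcmp G (fmap1 F (dom2 X \<beta>)) (fmap1 F (dom2 X \<alpha>)))"
    using G.cmp_nat[of "fmap2 F \<alpha>" "fmap2 F \<beta>"] assms by simp
  have nF: "vcomp Z (fmap2 G (fcmp F (cod2 X \<beta>) (cod2 X \<alpha>))) (fmap2 G (hcomp2 Y (fmap2 F \<beta>) (fmap2 F \<alpha>)))
     = vcomp Z (fmap2 G (fmap2 F (hcomp2 X \<beta> \<alpha>))) (fmap2 G (fcmp F (dom2 X \<beta>) (dom2 X \<alpha>)))"
    using arg_cong[OF F.cmp_nat[OF assms], of "fmap2 G"] assms by simp
  show ?thesis using assms by (simp add: nG G.Y.tail[OF nF])
qed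

lemma comp_inv_nat:
  assumes a: "\<alpha> \<in> arr2 X"
  shows "vcomp Z (vcomp Z (fmap2 G (finv F (cod2 X \<alpha>))) (finv G (fmap1 F (cod2 X \<alpha>)))) (inv2 Z (fmap2 G (fmap2 F \<alpha>))) =
        vcomp Z (fmap2 G (fmap2 F (inv2 X \<alpha>))) (vcomp Z (fmap2 G (finv F (dom2 X \<alpha>))) (finv G (fmap1 F (dom2 X \<alpha>))))"
proof -
  have nG: "vcomp Z (finv G (fmap1 F (cod2 X \<alpha>))) (inv2 Z (fmap2 G (fmap2 F \<alpha>)))
     = vcomp Z (fmap2 G (inv2 Y (fmap2 F \<alpha>))) (finv G (fmap1 F (dom2 X \<alpha>)))"
    using G.inv_nat[of "fmap2 F \<alpha>"] assms by simp
  have nF: "vcomp Z (fmap2 G (finv F (cod2 X \<alpha>))) (fmap2 G (inv2 Y (fmap2 F \<alpha>)))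
     = vcomp Z (fmap2 G (fmap2 F (inv2 X \<alpha>))) (fmap2 G (finv F (dom2 X \<alpha>)))"
    using arg_cong[OF F.inv_nat[OF assms], of "fmap2 G"] assms by simp
  show ?thesis using assms by (simp add: nG G.Y.tail[OF nF])
qed

lemma comp_bm: "bimorphism X Z (bm_comp Z G F)"
  unfolding bimorphism_def bm_comp_def bimorph.simps comp_apply
  apply (intro conjI ballI impI)
  using F.X.bg G.Y.bg comp_cmp_nat comp_inv_nat comp_assoc comp_runit comp_lunit comp_ecell comp_icell
  by (simp_all add: cell_def)

end

definition transport ::
  "('o,'a,'c,'z) bigroupoid_scheme \<Rightarrow> ('p,'b,'d,'y) bigroupoid_scheme \<Rightarrow>
   ('o,'a,'c,'p,'b,'d) bimorph \<Rightarrow> ('a \<Rightarrow> 'd) \<Rightarrow> ('o,'a,'c,'p,'b,'d) bimorph" where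
  "transport X Y M \<theta> =
   \<lparr> fmap0 = fmap0 M,
     fmap1 = (\<lambda>x. dom2 Y (\<theta> x)),
     fmap2 = (\<lambda>\<alpha>. vcomp Y (vinv Y (\<theta> (cod2 X \<alpha>))) (vcomp Y (fmap2 M \<alpha>) (\<theta> (dom2 X \<alpha>)))),
     fcmp = (\<lambda>g f. vcomp Y (vinv Y (\<theta> (hcomp1 X g f))) (vcomp Y (fcmp M g f) (hcomp2 Y (\<theta> g) (\<theta> f)))),
     funit = (\<lambda>x. vcomp Y (vinv Y (\<theta> (unit1 X x))) (funit M x)),
     finv = (\<lambda>f. vcomp Y (vinv Y (\<theta> (inv1 X f))) (vcomp Y (finv M f) (inv2 Y (\<theta> f)))) \<rparr>"

locale bmt = bm X Y M
  for X :: "('o,'a,'c,'z) bigroupoid_scheme" and Y :: "('p,'b,'d,'y) bigroupoid_scheme"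
    and M :: "('o,'a,'c,'p,'b,'d) bimorph" +
  fixes \<theta> :: "'a \<Rightarrow> 'd"
  assumes th_arr[simp]: "x \<in> arr1 X \<Longrightarrow> \<theta> x \<in> arr2 Y"
    and th_cod[simp]: "x \<in> arr1 X \<Longrightarrow> cod2 Y (\<theta> x) = fmap1 M x"
begin

lemma th_src[simp]: "x \<in> arr1 X \<Longrightarrow> src1 Y (dom2 Y (\<theta> x)) = fmap0 M (src1 X x)"
  by (metis Y.src_cod th_arr th_cod F1_src)
lemma th_tgt[simp]: "x \<in> arr1 X \<Longrightarrow> tgt1 Y (dom2 Y (\<theta> x)) = fmap0 M (tgt1 X x)"
  by (metis Y.tgt_cod th_arr th_cod F1_tgt)
lemma th_dom_arr[simp]: "x \<in> arr1 X \<Longrightarrow> dom2 Y (\<theta> x) \<in> arr1 Y"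
  by simp

lemma tr_nat:
  assumes a: "\<alpha> \<in> arr2 X" and b: "\<beta> \<in> arr2 X" and ab: "src1 X (dom2 X \<beta>) = tgt1 X (dom2 X \<alpha>)"
  shows "vcomp Y (vcomp Y (vinv Y (\<theta> (hcomp1 X (cod2 X \<beta>) (cod2 X \<alpha>)))) (vcomp Y (fcmp M (cod2 X \<beta>) (cod2 X \<alpha>)) (hcomp2 Y (\<theta> (cod2 X \<beta>)) (\<theta> (cod2 X \<alpha>)))))
      (hcomp2 Y (vcomp Y (vinv Y (\<theta> (cod2 X \<beta>))) (vcomp Y (fmap2 M \<beta>) (\<theta> (dom2 X \<beta>))))
                (vcomp Y (vinv Y (\<theta> (cod2 X \<alpha>))) (vcomp Y (fmap2 M \<alpha>) (\<theta> (dom2 X \<alpha>))))) =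
    vcomp Y (vcomp Y (vinv Y (\<theta> (cod2 X (hcomp2 X \<beta> \<alpha>)))) (vcomp Y (fmap2 M (hcomp2 X \<beta> \<alpha>)) (\<theta> (dom2 X (hcomp2 X \<beta> \<alpha>)))))
      (vcomp Y (vinv Y (\<theta> (hcomp1 X (dom2 X \<beta>) (dom2 X \<alpha>)))) (vcomp Y (fcmp M (dom2 X \<beta>) (dom2 X \<alpha>)) (hcomp2 Y (\<theta> (dom2 X \<beta>)) (\<theta> (dom2 X \<alpha>)))))"
proof -
  have m: "vcomp Y (hcomp2 Y (\<theta> (cod2 X \<beta>)) (\<theta> (cod2 X \<alpha>)))
      (hcomp2 Y (vcomp Y (vinv Y (\<theta> (cod2 X \<beta>))) (vcomp Y (fmap2 M \<beta>) (\<theta> (dom2 X \<beta>))))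
                (vcomp Y (vinv Y (\<theta> (cod2 X \<alpha>))) (vcomp Y (fmap2 M \<alpha>) (\<theta> (dom2 X \<alpha>)))))
     = vcomp Y (hcomp2 Y (fmap2 M \<beta>) (fmap2 M \<alpha>)) (hcomp2 Y (\<theta> (dom2 X \<beta>)) (\<theta> (dom2 X \<alpha>)))"
    using assms by (simp add: Y.interchange[symmetric] del: Y.vassoc)
  show ?thesis using assms by (simp add: m Y.tail[OF m] Y.tail[OF cmp_nat[OF assms]])
qed

abbreviation (input) "T \<equiv> \<theta>"
abbreviation (input) "bb x \<equiv> dom2 Y (\<theta> x)"
abbreviation (input) "trF2 \<alpha> \<equiv> vcomp Y (vinv Y (\<theta> (cod2 X \<alpha>))) (vcomp Y (fmap2 M \<alpha>) (\<theta> (dom2 X \<alpha>)))"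
abbreviation (input) "trcmp g f \<equiv> vcomp Y (vinv Y (\<theta> (hcomp1 X g f))) (vcomp Y (fcmp M g f) (hcomp2 Y (\<theta> g) (\<theta> f)))"
abbreviation (input) "trunit x \<equiv> vcomp Y (vinv Y (\<theta> (unit1 X x))) (funit M x)"
abbreviation (input) "trinv f \<equiv> vcomp Y (vinv Y (\<theta> (inv1 X f))) (vcomp Y (finv M f) (inv2 Y (\<theta> f)))"

lemma tr_inv_nat:
  assumes a: "\<alpha> \<in> arr2 X"
  shows "vcomp Y (trinv (cod2 X \<alpha>)) (inv2 Y (trF2 \<alpha>)) = vcomp Y (trF2 (inv2 X \<alpha>)) (trinv (dom2 X \<alpha>))"
  using assms by (simp add: Y.vinv_inv2[symmetric] inv_nat Y.tail[OF inv_nat[OF a]])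

lemma tr_assoc:
  assumes f: "f \<in> arr1 X" and g: "g \<in> arr1 X" and h: "h \<in> arr1 X"
    and gf: "src1 X g = tgt1 X f" and hg: "src1 X h = tgt1 X g"
  shows "vcomp Y (trF2 (assoc X h g f)) (vcomp Y (trcmp (hcomp1 X h g) f) (hcomp2 Y (trcmp h g) (vid Y (bb f)))) =
    vcomp Y (trcmp h (hcomp1 X g f)) (vcomp Y (hcomp2 Y (vid Y (bb h)) (trcmp g f)) (assoc Y (bb h) (bb g) (bb f)))"
proof -
  let ?Ma = "fmap2 M (assoc X h g f)" and ?\<phi>1 = "fcmp M (hcomp1 X h g) f" and ?\<phi>2 = "fcmp M h g"
    and ?\<phi>3 = "fcmp M h (hcomp1 X g f)" and ?\<phi>4 = "fcmp M g f"
  have K: "vcomp Y ?Ma (vcomp Y ?\<phi>1 (hcomp2 Y (vcomp Y ?\<phi>2 (hcomp2 Y (T h) (T g))) (T f)))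
      = vcomp Y ?\<phi>3 (vcomp Y (hcomp2 Y (T h) (vcomp Y ?\<phi>4 (hcomp2 Y (T g) (T f)))) (assoc Y (bb h) (bb g) (bb f)))"
  proof -
    have i1: "hcomp2 Y (vcomp Y ?\<phi>2 (hcomp2 Y (T h) (T g))) (T f) =
        vcomp Y (hcomp2 Y ?\<phi>2 (vid Y (fmap1 M f))) (hcomp2 Y (hcomp2 Y (T h) (T g)) (T f))"
      using Y.interchange[of "T f" "vid Y (fmap1 M f)" "hcomp2 Y (T h) (T g)" ?\<phi>2] assms by simp
    have an: "vcomp Y (assoc Y (fmap1 M h) (fmap1 M g) (fmap1 M f)) (hcomp2 Y (hcomp2 Y (T h) (T g)) (T f)) =
        vcomp Y (hcomp2 Y (T h) (hcomp2 Y (T g) (T f))) (assoc Y (bb h) (bb g) (bb f))"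
      using Y.assoc_nat[of "T f" "T g" "T h"] assms by simp
    have i2: "vcomp Y (hcomp2 Y (vid Y (fmap1 M h)) ?\<phi>4) (hcomp2 Y (T h) (hcomp2 Y (T g) (T f))) =
        hcomp2 Y (T h) (vcomp Y ?\<phi>4 (hcomp2 Y (T g) (T f)))"
      using Y.interchange[of "hcomp2 Y (T g) (T f)" ?\<phi>4 "T h" "vid Y (fmap1 M h)"] assms by simp
    show ?thesis using assms
      by (simp add: i1 Y.tail3[OF coh_assoc[OF assms]] an Y.tail[OF i2])
  qed
  show ?thesis using assms
    by (simp add: Y.interchange[symmetric] Y.tail[OF Y.interchange[symmetric]] K)
qed

lemma tr_runit:
  assumes f: "f \<in> arr1 X"
  shows "vcomp Y (trF2 (runit X f)) (vcomp Y (trcmp f (unit1 X (src1 X f))) (hcomp2 Y (vid Y (bb f)) (trunit (src1 X f)))) =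
    runit Y (bb f)"
proof -
  let ?u = "funit M (src1 X f)"
  have K: "vcomp Y (fmap2 M (runit X f)) (vcomp Y (fcmp M f (unit1 X (src1 X f))) (hcomp2 Y (T f) ?u)) = vcomp Y (T f) (runit Y (bb f))"
  proof -
    have i1: "hcomp2 Y (T f) ?u = vcomp Y (hcomp2 Y (vid Y (fmap1 M f)) ?u) (hcomp2 Y (T f) (vid Y (unit1 Y (fmap0 M (src1 X f)))))"
      using Y.interchange[of "vid Y (unit1 Y (fmap0 M (src1 X f)))" ?u "T f" "vid Y (fmap1 M f)"] assms by simp
    have rn: "vcomp Y (runit Y (fmap1 M f)) (hcomp2 Y (T f) (vid Y (unit1 Y (fmap0 M (src1 X f))))) = vcomp Y (T f) (runit Y (bb f))"
      using Y.runit_nat[of "T f"] assms by simp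
    show ?thesis using assms by (simp add: i1 Y.tail3[OF coh_runit[OF assms]] rn)
  qed
  show ?thesis using assms
    by (simp add: Y.interchange[symmetric] Y.tail[OF Y.interchange[symmetric]] K)
qed

lemma tr_lunit:
  assumes f: "f \<in> arr1 X"
  shows "vcomp Y (trF2 (lunit X f)) (vcomp Y (trcmp (unit1 X (tgt1 X f)) f) (hcomp2 Y (trunit (tgt1 X f)) (vid Y (bb f)))) =
    lunit Y (bb f)"
proof -
  let ?u = "funit M (tgt1 X f)"
  have K: "vcomp Y (fmap2 M (lunit X f)) (vcomp Y (fcmp M (unit1 X (tgt1 X f)) f) (hcomp2 Y ?u (T f))) = vcomp Y (T f) (lunit Y (bb f))"
  proof -
    have i1: "hcomp2 Y ?u (T f) = vcomp Y (hcomp2 Y ?u (vid Y (fmap1 M f))) (hcomp2 Y (vid Y (unit1 Y (fmap0 M (tgt1 X f)))) (T f))"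
      using Y.interchange[of "T f" "vid Y (fmap1 M f)" "vid Y (unit1 Y (fmap0 M (tgt1 X f)))" ?u] assms by simp
    have rn: "vcomp Y (lunit Y (fmap1 M f)) (hcomp2 Y (vid Y (unit1 Y (fmap0 M (tgt1 X f)))) (T f)) = vcomp Y (T f) (lunit Y (bb f))"
      using Y.lunit_nat[of "T f"] assms by simp
    show ?thesis using assms by (simp add: i1 Y.tail3[OF coh_lunit[OF assms]] rn)
  qed
  show ?thesis using assms
    by (simp add: Y.interchange[symmetric] Y.tail[OF Y.interchange[symmetric]] K)
qed

lemma tr_ecell:
  assumes f: "f \<in> arr1 X"
  shows "vcomp Y (trF2 (ecell X f)) (vcomp Y (trcmp (inv1 X f) f) (hcomp2 Y (trinv f) (vid Y (bb f)))) =
    vcomp Y (trunit (src1 X f)) (ecell Y (bb f))"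
proof -
  have K: "vcomp Y (fmap2 M (ecell X f)) (vcomp Y (fcmp M (inv1 X f) f) (hcomp2 Y (vcomp Y (finv M f) (inv2 Y (T f))) (T f)))
      = vcomp Y (funit M (src1 X f)) (ecell Y (bb f))"
  proof -
    have i1: "hcomp2 Y (vcomp Y (finv M f) (inv2 Y (T f))) (T f) = vcomp Y (hcomp2 Y (finv M f) (vid Y (fmap1 M f))) (hcomp2 Y (inv2 Y (T f)) (T f))"
      using Y.interchange[of "T f" "vid Y (fmap1 M f)" "inv2 Y (T f)" "finv M f"] assms by simp
    have rn: "vcomp Y (ecell Y (fmap1 M f)) (hcomp2 Y (inv2 Y (T f)) (T f)) = ecell Y (bb f)"
      using Y.ecell_nat[of "T f"] assms by simp
    show ?thesis using assms by (simp add: i1 Y.tail3[OF coh_ecell[OF assms]] rn)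
  qed
  show ?thesis using assms
    by (simp add: Y.interchange[symmetric] Y.tail[OF Y.interchange[symmetric]] K)
qed

lemma tr_icell:
  assumes f: "f \<in> arr1 X"
  shows "vcomp Y (trF2 (icell X f)) (trunit (tgt1 X f)) =
    vcomp Y (trcmp f (inv1 X f)) (vcomp Y (hcomp2 Y (vid Y (bb f)) (trinv f)) (icell Y (bb f)))"
proof -
  have K: "vcomp Y (fmap2 M (icell X f)) (funit M (tgt1 X f))
      = vcomp Y (fcmp M f (inv1 X f)) (vcomp Y (hcomp2 Y (T f) (vcomp Y (finv M f) (inv2 Y (T f)))) (icell Y (bb f)))"
  proof -
    have rn: "icell Y (fmap1 M f) = vcomp Y (hcomp2 Y (T f) (inv2 Y (T f))) (icell Y (bb f))"
      using Y.icell_nat[of "T f"] assms by simp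
    have i2: "vcomp Y (hcomp2 Y (vid Y (fmap1 M f)) (finv M f)) (hcomp2 Y (T f) (inv2 Y (T f))) =
        hcomp2 Y (T f) (vcomp Y (finv M f) (inv2 Y (T f)))"
      using Y.interchange[of "inv2 Y (T f)" "finv M f" "T f" "vid Y (fmap1 M f)"] assms by simp
    show ?thesis using assms by (simp add: coh_icell rn Y.tail[OF i2] del: Y.icell_nat)
  qed
  show ?thesis using assms
    by (simp add: Y.interchange[symmetric] Y.tail[OF Y.interchange[symmetric]] K)
qed

lemma tr_bm: "bimorphism X Y (transport X Y M \<theta>)"
  unfolding bimorphism_def transport_def bimorph.simps
  apply (intro conjI ballI impI)
  using X.bg Y.bg tr_nat tr_inv_nat tr_assoc tr_runit tr_lunit tr_ecell tr_icell
  by (simp_all add: cell_def)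

end

locale pinv = bm A D K
  for A :: "('o,'a,'c,'z) bigroupoid_scheme" and D :: "('p,'b,'d,'y) bigroupoid_scheme"
    and K :: "('o,'a,'c,'p,'b,'d) bimorph" +
  assumes inj0: "inj_on (fmap0 K) (obj A)"
    and surj0: "fmap0 K ` obj A = obj D"
    and inj1: "a \<in> arr1 A \<Longrightarrow> a' \<in> arr1 A \<Longrightarrow> fmap1 K a = fmap1 K a' \<Longrightarrow> a = a'"
    and faith: "\<alpha> \<in> arr2 A \<Longrightarrow> \<alpha>' \<in> arr2 A \<Longrightarrow> dom2 A \<alpha> = dom2 A \<alpha>' \<Longrightarrow> cod2 A \<alpha> = cod2 A \<alpha>' \<Longrightarrow>
        fmap2 K \<alpha> = fmap2 K \<alpha>' \<Longrightarrow> \<alpha> = \<alpha>'"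
    and full: "a \<in> arr1 A \<Longrightarrow> a' \<in> arr1 A \<Longrightarrow> \<delta> \<in> arr2 D \<Longrightarrow> dom2 D \<delta> = fmap1 K a \<Longrightarrow> cod2 D \<delta> = fmap1 K a' \<Longrightarrow>
        \<exists>\<alpha>\<in>arr2 A. fmap2 K \<alpha> = \<delta>"
    and ess: "d \<in> arr1 D \<Longrightarrow> \<exists>a\<in>arr1 A. \<exists>\<epsilon>\<in>arr2 D. dom2 D \<epsilon> = d \<and> cod2 D \<epsilon> = fmap1 K a"
begin

definition J0 where "J0 y = inv_into (obj A) (fmap0 K) y"
definition rr where "rr d = (if d \<in> fmap1 K ` arr1 A then the_inv_into (arr1 A) (fmap1 K) d
     else (SOME a. a \<in> arr1 A \<and> (\<exists>\<epsilon>\<in>arr2 D. dom2 D \<epsilon> = d \<and> cod2 D \<epsilon> = fmap1 K a)))"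
definition ee where "ee d = (if d \<in> fmap1 K ` arr1 A then vid D d
     else (SOME \<epsilon>. \<epsilon> \<in> arr2 D \<and> dom2 D \<epsilon> = d \<and> cod2 D \<epsilon> = fmap1 K (rr d)))"
definition Ki where "Ki \<delta> = (SOME \<alpha>. \<alpha> \<in> arr2 A \<and> fmap2 K \<alpha> = \<delta>)"

lemma K0J0[simp]: "y \<in> obj D \<Longrightarrow> fmap0 K (J0 y) = y"
  unfolding J0_def using surj0 by (simp add: f_inv_into_f)
lemma J0_obj[simp]: "y \<in> obj D \<Longrightarrow> J0 y \<in> obj A"
  unfolding J0_def using surj0 by (metis inv_into_into)
lemma J0K0[simp]: "x \<in> obj A \<Longrightarrow> J0 (fmap0 K x) = x"
  unfolding J0_def using inj0 by simp
lemma inj1': "inj_on (fmap1 K) (arr1 A)" using inj1 by (meson inj_onI)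
lemma imK[simp]: "a \<in> arr1 A \<Longrightarrow> fmap1 K a \<in> fmap1 K ` arr1 A" by blast

lemma rr_K[simp]: "a \<in> arr1 A \<Longrightarrow> rr (fmap1 K a) = a"
  unfolding rr_def using inj1' by (simp add: the_inv_into_f_f)
lemma ee_K[simp]: "a \<in> arr1 A \<Longrightarrow> ee (fmap1 K a) = vid D (fmap1 K a)"
  unfolding ee_def by simp

lemma rr_ee: assumes d: "d \<in> arr1 D"
  shows "rr d \<in> arr1 A \<and> ee d \<in> arr2 D \<and> dom2 D (ee d) = d \<and> cod2 D (ee d) = fmap1 K (rr d)"
proof (cases "d \<in> fmap1 K ` arr1 A")
  case True
  then obtain a where a: "a \<in> arr1 A" "d = fmap1 K a" by blast
  thus ?thesis by simp
next
  case False
  have ex: "\<exists>a. a \<in> arr1 A \<and> (\<exists>\<epsilon>\<in>arr2 D. dom2 D \<epsilon> = d \<and> cod2 D \<epsilon> = fmap1 K a)" using ess[OF d] by blast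
  have r: "rr d \<in> arr1 A \<and> (\<exists>\<epsilon>\<in>arr2 D. dom2 D \<epsilon> = d \<and> cod2 D \<epsilon> = fmap1 K (rr d))"
    unfolding rr_def using False someI_ex[OF ex] by simp
  hence "\<exists>\<epsilon>. \<epsilon> \<in> arr2 D \<and> dom2 D \<epsilon> = d \<and> cod2 D \<epsilon> = fmap1 K (rr d)" by blast
  from someI_ex[OF this] have "ee d \<in> arr2 D \<and> dom2 D (ee d) = d \<and> cod2 D (ee d) = fmap1 K (rr d)"
    unfolding ee_def using False by simp
  thus ?thesis using r by blast
qed

lemma rr_arr[simp]: "d \<in> arr1 D \<Longrightarrow> rr d \<in> arr1 A" using rr_ee by blast
lemma ee_arr[simp]: "d \<in> arr1 D \<Longrightarrow> ee d \<in> arr2 D" using rr_ee by blast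
lemma ee_dom[simp]: "d \<in> arr1 D \<Longrightarrow> dom2 D (ee d) = d" using rr_ee by blast
lemma ee_cod[simp]: "d \<in> arr1 D \<Longrightarrow> cod2 D (ee d) = fmap1 K (rr d)" using rr_ee by blast

lemma rr_src[simp]: assumes d: "d \<in> arr1 D" shows "src1 A (rr d) = J0 (src1 D d)"
proof -
  have "fmap0 K (src1 A (rr d)) = src1 D (cod2 D (ee d))" using d by simp
  also have "\<dots> = src1 D d" using d by (simp del: ee_cod)
  finally have "fmap0 K (src1 A (rr d)) = src1 D d" .
  hence "J0 (fmap0 K (src1 A (rr d))) = J0 (src1 D d)" by simp
  thus ?thesis using d by simp
qed
lemma rr_tgt[simp]: assumes d: "d \<in> arr1 D" shows "tgt1 A (rr d) = J0 (tgt1 D d)"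
proof -
  have "fmap0 K (tgt1 A (rr d)) = tgt1 D (cod2 D (ee d))" using d by simp
  also have "\<dots> = tgt1 D d" using d by (simp del: ee_cod)
  finally have "fmap0 K (tgt1 A (rr d)) = tgt1 D d" .
  hence "J0 (fmap0 K (tgt1 A (rr d))) = J0 (tgt1 D d)" by simp
  thus ?thesis using d by simp
qed

lemma kinj: assumes "\<alpha> \<in> arr2 A" "\<alpha>' \<in> arr2 A" "fmap2 K \<alpha> = fmap2 K \<alpha>'" shows "\<alpha> = \<alpha>'"
proof -
  have "fmap1 K (dom2 A \<alpha>) = fmap1 K (dom2 A \<alpha>')" using assms by (metis F2_dom)
  hence 1: "dom2 A \<alpha> = dom2 A \<alpha>'" using assms inj1 by simp
  have "fmap1 K (cod2 A \<alpha>) = fmap1 K (cod2 A \<alpha>')" using assms by (metis F2_cod)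
  hence 2: "cod2 A \<alpha> = cod2 A \<alpha>'" using assms inj1 by simp
  show ?thesis using faith[OF assms(1,2) 1 2 assms(3)] .
qed

lemma Ki_props: assumes "\<delta> \<in> arr2 D" "dom2 D \<delta> \<in> fmap1 K ` arr1 A" "cod2 D \<delta> \<in> fmap1 K ` arr1 A"
  shows "Ki \<delta> \<in> arr2 A \<and> fmap2 K (Ki \<delta>) = \<delta>"
proof -
  obtain a a' where "a \<in> arr1 A" "a' \<in> arr1 A" "dom2 D \<delta> = fmap1 K a" "cod2 D \<delta> = fmap1 K a'" using assms by blast
  from full[OF this(1,2) assms(1) this(3,4)] have "\<exists>\<alpha>. \<alpha> \<in> arr2 A \<and> fmap2 K \<alpha> = \<delta>" by blast
  from someI_ex[OF this] show ?thesis unfolding Ki_def .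
qed
lemma Ki_arr[simp]: "\<delta> \<in> arr2 D \<Longrightarrow> dom2 D \<delta> \<in> fmap1 K ` arr1 A \<Longrightarrow> cod2 D \<delta> \<in> fmap1 K ` arr1 A \<Longrightarrow> Ki \<delta> \<in> arr2 A"
  using Ki_props by blast
lemma K_Ki[simp]: "\<delta> \<in> arr2 D \<Longrightarrow> dom2 D \<delta> \<in> fmap1 K ` arr1 A \<Longrightarrow> cod2 D \<delta> \<in> fmap1 K ` arr1 A \<Longrightarrow> fmap2 K (Ki \<delta>) = \<delta>"
  using Ki_props by blast
lemma Ki_dom[simp]: assumes "\<delta> \<in> arr2 D" "dom2 D \<delta> \<in> fmap1 K ` arr1 A" "cod2 D \<delta> \<in> fmap1 K ` arr1 A"
  shows "dom2 A (Ki \<delta>) = rr (dom2 D \<delta>)"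
proof -
  have "fmap1 K (dom2 A (Ki \<delta>)) = dom2 D \<delta>" using assms by (metis F2_dom Ki_props)
  thus ?thesis using assms by (metis rr_K Ki_arr X.dom_arr)
qed
lemma Ki_cod[simp]: assumes "\<delta> \<in> arr2 D" "dom2 D \<delta> \<in> fmap1 K ` arr1 A" "cod2 D \<delta> \<in> fmap1 K ` arr1 A"
  shows "cod2 A (Ki \<delta>) = rr (cod2 D \<delta>)"
proof -
  have "fmap1 K (cod2 A (Ki \<delta>)) = cod2 D \<delta>" using assms by (metis F2_cod Ki_props)
  thus ?thesis using assms by (metis rr_K Ki_arr X.cod_arr)
qed
lemma Ki_K[simp]: "\<alpha> \<in> arr2 A \<Longrightarrow> Ki (fmap2 K \<alpha>) = \<alpha>"
  by (rule kinj) auto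

lemma K_hcomp2[simp]: assumes a: "\<alpha> \<in> arr2 A" and b: "\<beta> \<in> arr2 A" and ab: "src1 A (dom2 A \<beta>) = tgt1 A (dom2 A \<alpha>)"
  shows "fmap2 K (hcomp2 A \<beta> \<alpha>) = vcomp D (fcmp K (cod2 A \<beta>) (cod2 A \<alpha>))
     (vcomp D (hcomp2 D (fmap2 K \<beta>) (fmap2 K \<alpha>)) (vinv D (fcmp K (dom2 A \<beta>) (dom2 A \<alpha>))))"
  using Y.solve[OF cmp_nat[OF assms, symmetric]] assms by simp

lemma K_inv2[simp]: assumes a: "\<alpha> \<in> arr2 A"
  shows "fmap2 K (inv2 A \<alpha>) = vcomp D (finv K (cod2 A \<alpha>)) (vcomp D (inv2 D (fmap2 K \<alpha>)) (vinv D (finv K (dom2 A \<alpha>))))"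
  using Y.solve[OF inv_nat[OF assms, symmetric]] assms by simp

lemma K_assoc[simp]: assumes "f \<in> arr1 A" "g \<in> arr1 A" "h \<in> arr1 A" "src1 A g = tgt1 A f" "src1 A h = tgt1 A g"
  shows "fmap2 K (assoc A h g f) = vcomp D (fcmp K h (hcomp1 A g f))
          (vcomp D (hcomp2 D (vid D (fmap1 K h)) (fcmp K g f))
            (vcomp D (assoc D (fmap1 K h) (fmap1 K g) (fmap1 K f))
              (vcomp D (hcomp2 D (vinv D (fcmp K h g)) (vid D (fmap1 K f))) (vinv D (fcmp K (hcomp1 A h g) f)))))"
  using Y.solve[OF coh_assoc[OF assms]] assms by simp

lemma K_runit[simp]: assumes "f \<in> arr1 A"
  shows "fmap2 K (runit A f) = vcomp D (runit D (fmap1 K f))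
     (vcomp D (hcomp2 D (vid D (fmap1 K f)) (vinv D (funit K (src1 A f)))) (vinv D (fcmp K f (unit1 A (src1 A f)))))"
  using Y.solve[OF coh_runit[OF assms]] assms by simp

lemma K_lunit[simp]: assumes "f \<in> arr1 A"
  shows "fmap2 K (lunit A f) = vcomp D (lunit D (fmap1 K f))
     (vcomp D (hcomp2 D (vinv D (funit K (tgt1 A f))) (vid D (fmap1 K f))) (vinv D (fcmp K (unit1 A (tgt1 A f)) f)))"
  using Y.solve[OF coh_lunit[OF assms]] assms by simp

lemma K_ecell[simp]: assumes "f \<in> arr1 A"
  shows "fmap2 K (ecell A f) = vcomp D (funit K (src1 A f)) (vcomp D (ecell D (fmap1 K f))
     (vcomp D (hcomp2 D (vinv D (finv K f)) (vid D (fmap1 K f))) (vinv D (fcmp K (inv1 A f) f))))"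
  using Y.solve[OF coh_ecell[OF assms]] assms by simp

lemma K_icell[simp]: assumes "f \<in> arr1 A"
  shows "fmap2 K (icell A f) = vcomp D (fcmp K f (inv1 A f))
          (vcomp D (hcomp2 D (vid D (fmap1 K f)) (finv K f)) (vcomp D (icell D (fmap1 K f)) (vinv D (funit K (tgt1 A f)))))"
  using Y.solve[OF coh_icell[OF assms]] assms by simp

definition JJ where "JJ = \<lparr> fmap0 = J0, fmap1 = rr,
   fmap2 = (\<lambda>\<delta>. Ki (vcomp D (ee (cod2 D \<delta>)) (vcomp D \<delta> (vinv D (ee (dom2 D \<delta>)))))),
   fcmp = (\<lambda>g f. Ki (vcomp D (ee (hcomp1 D g f)) (vcomp D (hcomp2 D (vinv D (ee g)) (vinv D (ee f))) (vinv D (fcmp K (rr g) (rr f)))))),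
   funit = (\<lambda>y. Ki (vcomp D (ee (unit1 D y)) (vinv D (funit K (J0 y))))),
   finv = (\<lambda>f. Ki (vcomp D (ee (inv1 D f)) (vcomp D (inv2 D (vinv D (ee f))) (vinv D (finv K (rr f)))))) \<rparr>"

lemma JJ_simps[simp]: "fmap0 JJ = J0" "fmap1 JJ = rr"
  "fmap2 JJ \<delta> = Ki (vcomp D (ee (cod2 D \<delta>)) (vcomp D \<delta> (vinv D (ee (dom2 D \<delta>)))))"
  "fcmp JJ g f = Ki (vcomp D (ee (hcomp1 D g f)) (vcomp D (hcomp2 D (vinv D (ee g)) (vinv D (ee f))) (vinv D (fcmp K (rr g) (rr f)))))"
  "funit JJ y = Ki (vcomp D (ee (unit1 D y)) (vinv D (funit K (J0 y))))"
  "finv JJ f = Ki (vcomp D (ee (inv1 D f)) (vcomp D (inv2 D (vinv D (ee f))) (vinv D (finv K (rr f)))))"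
  unfolding JJ_def by simp_all

lemma J_vid: "f \<in> arr1 D \<Longrightarrow> fmap2 JJ (vid D f) = vid A (rr f)"
  by (rule kinj) auto
lemma J_vcomp: "\<alpha> \<in> arr2 D \<Longrightarrow> \<beta> \<in> arr2 D \<Longrightarrow> cod2 D \<alpha> = dom2 D \<beta> \<Longrightarrow>
  fmap2 JJ (vcomp D \<beta> \<alpha>) = vcomp A (fmap2 JJ \<beta>) (fmap2 JJ \<alpha>)"
  by (rule kinj) auto

lemma J_nat: "\<alpha> \<in> arr2 D \<Longrightarrow> \<beta> \<in> arr2 D \<Longrightarrow> src1 D (dom2 D \<beta>) = tgt1 D (dom2 D \<alpha>) \<Longrightarrow>
        vcomp A (fcmp JJ (cod2 D \<beta>) (cod2 D \<alpha>)) (hcomp2 A (fmap2 JJ \<beta>) (fmap2 JJ \<alpha>)) =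
        vcomp A (fmap2 JJ (hcomp2 D \<beta> \<alpha>)) (fcmp JJ (dom2 D \<beta>) (dom2 D \<alpha>))"
  apply (rule kinj)
  by (simp_all add: Y.interchange[symmetric] Y.tail[OF Y.interchange[symmetric]])

lemma J_assoc: assumes "f \<in> arr1 D" "g \<in> arr1 D" "h \<in> arr1 D" "src1 D g = tgt1 D f" "src1 D h = tgt1 D g"
  shows "vcomp A (fmap2 JJ (assoc D h g f)) (vcomp A (fcmp JJ (hcomp1 D h g) f) (hcomp2 A (fcmp JJ h g) (vid A (fmap1 JJ f)))) =
    vcomp A (fcmp JJ h (hcomp1 D g f)) (vcomp A (hcomp2 A (vid A (fmap1 JJ h)) (fcmp JJ g f)) (assoc A (fmap1 JJ h) (fmap1 JJ g) (fmap1 JJ f)))"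
proof -
  let ?eh = "vinv D (ee h)" and ?eg = "vinv D (ee g)" and ?ef = "vinv D (ee f)" and ?vk = "vinv D (fcmp K (rr h) (rr g))"
  let ?Kf = "fmap1 K (rr f)" and ?Kg = "fmap1 K (rr g)" and ?Kh = "fmap1 K (rr h)"
  have i: "hcomp2 D (vcomp D (hcomp2 D ?eh ?eg) ?vk) ?ef = vcomp D (hcomp2 D (hcomp2 D ?eh ?eg) ?ef) (hcomp2 D ?vk (vid D ?Kf))"
    using Y.interchange[of "vid D ?Kf" ?ef ?vk "hcomp2 D ?eh ?eg"] assms by simp
  have n: "vcomp D (assoc D h g f) (hcomp2 D (hcomp2 D ?eh ?eg) ?ef) = vcomp D (hcomp2 D ?eh (hcomp2 D ?eg ?ef)) (assoc D ?Kh ?Kg ?Kf)"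
    using Y.assoc_nat[of ?ef ?eg ?eh] assms by simp
  have key: "vcomp D (assoc D h g f) (hcomp2 D (vcomp D (hcomp2 D ?eh ?eg) ?vk) ?ef) =
     vcomp D (hcomp2 D ?eh (hcomp2 D ?eg ?ef)) (vcomp D (assoc D ?Kh ?Kg ?Kf) (hcomp2 D ?vk (vid D ?Kf)))"
    using assms by (simp add: i Y.tail[OF n])
  show ?thesis
  apply (rule kinj)
  using assms by (simp_all add: Y.interchange[symmetric] Y.tail[OF Y.interchange[symmetric]] Y.tail[OF key])
qed

lemma J_runit: assumes "f \<in> arr1 D"
  shows "vcomp A (fmap2 JJ (runit D f))
          (vcomp A (fcmp JJ f (unit1 D (src1 D f))) (hcomp2 A (vid A (fmap1 JJ f)) (funit JJ (src1 D f)))) =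
        runit A (fmap1 JJ f)"
proof -
  let ?e = "vinv D (ee f)" and ?u = "vinv D (funit K (J0 (src1 D f)))" and ?k = "fmap1 K (rr f)"
  have i: "hcomp2 D ?e ?u = vcomp D (hcomp2 D ?e (vid D (unit1 D (src1 D f)))) (hcomp2 D (vid D ?k) ?u)"
    using Y.interchange[of ?u "vid D (unit1 D (src1 D f))" "vid D ?k" ?e] assms by simp
  have n: "vcomp D (runit D f) (hcomp2 D ?e (vid D (unit1 D (src1 D f)))) = vcomp D ?e (runit D ?k)"
    using Y.runit_nat[of ?e] assms by simp
  have key: "vcomp D (runit D f) (hcomp2 D ?e ?u) = vcomp D ?e (vcomp D (runit D ?k) (hcomp2 D (vid D ?k) ?u))"
    using assms by (simp add: i Y.tail[OF n])
  show ?thesis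
  apply (rule kinj)
  using assms by (simp_all add: Y.interchange[symmetric] Y.tail[OF Y.interchange[symmetric]] Y.tail[OF key])
qed

lemma J_lunit: assumes "f \<in> arr1 D"
  shows "vcomp A (fmap2 JJ (lunit D f))
          (vcomp A (fcmp JJ (unit1 D (tgt1 D f)) f) (hcomp2 A (funit JJ (tgt1 D f)) (vid A (fmap1 JJ f)))) =
        lunit A (fmap1 JJ f)"
proof -
  let ?e = "vinv D (ee f)" and ?u = "vinv D (funit K (J0 (tgt1 D f)))" and ?k = "fmap1 K (rr f)"
  have i: "hcomp2 D ?u ?e = vcomp D (hcomp2 D (vid D (unit1 D (tgt1 D f))) ?e) (hcomp2 D ?u (vid D ?k))"
    using Y.interchange[of "vid D ?k" ?e ?u "vid D (unit1 D (tgt1 D f))"] assms by simp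
  have n: "vcomp D (lunit D f) (hcomp2 D (vid D (unit1 D (tgt1 D f))) ?e) = vcomp D ?e (lunit D ?k)"
    using Y.lunit_nat[of ?e] assms by simp
  have key: "vcomp D (lunit D f) (hcomp2 D ?u ?e) = vcomp D ?e (vcomp D (lunit D ?k) (hcomp2 D ?u (vid D ?k)))"
    using assms by (simp add: i Y.tail[OF n])
  show ?thesis
  apply (rule kinj)
  using assms by (simp_all add: Y.interchange[symmetric] Y.tail[OF Y.interchange[symmetric]] Y.tail[OF key])
qed

lemma J_ecell: assumes "f \<in> arr1 D"
  shows "vcomp A (fmap2 JJ (ecell D f))
          (vcomp A (fcmp JJ (inv1 D f) f) (hcomp2 A (finv JJ f) (vid A (fmap1 JJ f)))) =
        vcomp A (funit JJ (src1 D f)) (ecell A (fmap1 JJ f))"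
proof -
  let ?e = "vinv D (ee f)" and ?u = "vinv D (finv K (rr f))" and ?k = "fmap1 K (rr f)"
  have i: "hcomp2 D (vcomp D (inv2 D ?e) ?u) ?e = vcomp D (hcomp2 D (inv2 D ?e) ?e) (hcomp2 D ?u (vid D ?k))"
    using Y.interchange[of "vid D ?k" ?e ?u "inv2 D ?e"] assms by simp
  have n: "vcomp D (ecell D f) (hcomp2 D (inv2 D ?e) ?e) = ecell D ?k"
    using Y.ecell_nat[of ?e] assms by simp
  have key: "vcomp D (ecell D f) (hcomp2 D (vcomp D (inv2 D ?e) ?u) ?e) = vcomp D (ecell D ?k) (hcomp2 D ?u (vid D ?k))"
    using assms by (simp add: i Y.tail[OF n])
  show ?thesis
  apply (rule kinj)
  using assms by (simp_all add: Y.interchange[symmetric] Y.tail[OF Y.interchange[symmetric]] Y.tail[OF key])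
qed

lemma J_icell: assumes "f \<in> arr1 D"
  shows "vcomp A (fmap2 JJ (icell D f)) (funit JJ (tgt1 D f)) =
        vcomp A (fcmp JJ f (inv1 D f))
          (vcomp A (hcomp2 A (vid A (fmap1 JJ f)) (finv JJ f)) (icell A (fmap1 JJ f)))"
proof -
  let ?e = "vinv D (ee f)" and ?k = "fmap1 K (rr f)"
  have n: "icell D f = vcomp D (hcomp2 D ?e (inv2 D ?e)) (icell D ?k)"
    using Y.icell_nat[of ?e] assms by simp
  show ?thesis
  apply (rule kinj)
  using assms by (simp_all add: Y.interchange[symmetric] Y.tail[OF Y.interchange[symmetric]] n)
qed

lemma J_inv_nat: "\<alpha> \<in> arr2 D \<Longrightarrow> vcomp A (finv JJ (cod2 D \<alpha>)) (inv2 A (fmap2 JJ \<alpha>)) =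
        vcomp A (fmap2 JJ (inv2 D \<alpha>)) (finv JJ (dom2 D \<alpha>))"
  apply (rule kinj)
  by (simp_all add: Y.vinv_inv2[symmetric])

lemma J_typ:
  "\<delta> \<in> arr2 D \<Longrightarrow> fmap2 JJ \<delta> \<in> arr2 A \<and> dom2 A (fmap2 JJ \<delta>) = rr (dom2 D \<delta>) \<and> cod2 A (fmap2 JJ \<delta>) = rr (cod2 D \<delta>)"
  "f \<in> arr1 D \<Longrightarrow> g \<in> arr1 D \<Longrightarrow> src1 D g = tgt1 D f \<Longrightarrow> fcmp JJ g f \<in> arr2 A \<and>
     dom2 A (fcmp JJ g f) = hcomp1 A (rr g) (rr f) \<and> cod2 A (fcmp JJ g f) = rr (hcomp1 D g f)"
  "y \<in> obj D \<Longrightarrow> funit JJ y \<in> arr2 A \<and> dom2 A (funit JJ y) = unit1 A (J0 y) \<and> cod2 A (funit JJ y) = rr (unit1 D y)"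
  "f \<in> arr1 D \<Longrightarrow> finv JJ f \<in> arr2 A \<and> dom2 A (finv JJ f) = inv1 A (rr f) \<and> cod2 A (finv JJ f) = rr (inv1 D f)"
  by simp_all

lemma JK_cmp: "f \<in> arr1 A \<Longrightarrow> g \<in> arr1 A \<Longrightarrow> src1 A g = tgt1 A f \<Longrightarrow>
   vcomp A (fmap2 JJ (fcmp K g f)) (fcmp JJ (fmap1 K g) (fmap1 K f)) = vid A (hcomp1 A g f)"
  by (rule kinj) simp_all
lemma JK_unit: "x \<in> obj A \<Longrightarrow>
   vcomp A (fmap2 JJ (funit K x)) (funit JJ (fmap0 K x)) = vid A (unit1 A x)"
  by (rule kinj) simp_all
lemma JK_inv: "a \<in> arr1 A \<Longrightarrow>
   vcomp A (fmap2 JJ (finv K a)) (finv JJ (fmap1 K a)) = vid A (inv1 A a)"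
  by (rule kinj) simp_all

lemma J_bm: "bimorphism D A JJ"
  unfolding bimorphism_def
  apply (intro conjI ballI impI)
  using X.bg Y.bg J_typ J_vid J_vcomp J_nat J_inv_nat J_assoc J_runit J_lunit J_ecell J_icell
  by (simp_all add: cell_def del: JJ_simps(3-6))

end

lemma pinv_intro:
  assumes bmK: "bimorphism A D K" and tc: "trivial_cofibration A D K" and s: "fmap0 K ` obj A = obj D"
  shows "pinv A D K"
proof -
  interpret K: bm A D K by (unfold_locales) (rule bmK)
  have inj0: "inj_on (fmap0 K) (obj A)" and inj1h: "\<And>X Y. X \<in> obj A \<Longrightarrow> Y \<in> obj A \<Longrightarrow> inj_on (fmap1 K) (cob (hom_cat A X Y))"
    using tc unfolding trivial_cofibration_def cofibration_def by auto
  have eqv: "\<And>X X'. X \<in> obj A \<Longrightarrow> X' \<in> obj A \<Longrightarrow>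
      cequivalence (hom_cat A X X') (hom_cat D (fmap0 K X) (fmap0 K X')) (fmap1 K) (fmap2 K)"
    using tc unfolding trivial_cofibration_def weak_equivalence_def by auto
  have inj1: "a = a'" if a: "a \<in> arr1 A" "a' \<in> arr1 A" "fmap1 K a = fmap1 K a'" for a a'
  proof -
    have "fmap0 K (src1 A a) = fmap0 K (src1 A a')" using a by (metis K.F1_src)
    hence 1: "src1 A a = src1 A a'" using inj0 a by (simp add: inj_on_def)
    have "fmap0 K (tgt1 A a) = fmap0 K (tgt1 A a')" using a by (metis K.F1_tgt)
    hence 2: "tgt1 A a = tgt1 A a'" using inj0 a by (simp add: inj_on_def)
    show ?thesis using inj1h[of "src1 A a" "tgt1 A a"] a 1 2 by (simp add: hom_cat_def inj_on_def)
  qed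
  have faith: "\<alpha> = \<alpha>'" if a: "\<alpha> \<in> arr2 A" "\<alpha>' \<in> arr2 A" "dom2 A \<alpha> = dom2 A \<alpha>'" "cod2 A \<alpha> = cod2 A \<alpha>'"
     "fmap2 K \<alpha> = fmap2 K \<alpha>'" for \<alpha> \<alpha>'
  proof -
    let ?X = "src1 A (dom2 A \<alpha>)" and ?X' = "tgt1 A (dom2 A \<alpha>)"
    have X: "?X \<in> obj A" "?X' \<in> obj A" using a by simp_all
    obtain Go Ga \<eta> \<epsilon> where nat: "cnat_iso (hom_cat A ?X ?X') (hom_cat A ?X ?X') id id (Go \<circ> fmap1 K) (Ga \<circ> fmap2 K) \<eta>"
      using eqv[OF X] unfolding cequivalence_def by blast
    have c1: "\<alpha> \<in> car (hom_cat A ?X ?X')" "\<alpha>' \<in> car (hom_cat A ?X ?X')" using a by (simp_all add: hom_cat_def)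
    have o: "cod2 A \<alpha> \<in> cob (hom_cat A ?X ?X')" using a by (simp add: hom_cat_def)
    have "vcomp A (\<eta> (cod2 A \<alpha>)) \<alpha> = vcomp A (Ga (fmap2 K \<alpha>)) (\<eta> (dom2 A \<alpha>))"
      using nat c1 unfolding cnat_iso_def by (simp add: hom_cat_def)
    moreover have "vcomp A (\<eta> (cod2 A \<alpha>')) \<alpha>' = vcomp A (Ga (fmap2 K \<alpha>')) (\<eta> (dom2 A \<alpha>'))"
      using nat c1 unfolding cnat_iso_def by (simp add: hom_cat_def)
    ultimately have e: "vcomp A (\<eta> (cod2 A \<alpha>)) \<alpha> = vcomp A (\<eta> (cod2 A \<alpha>)) \<alpha>'" using a by simp
    have h: "\<eta> (cod2 A \<alpha>) \<in> arr2 A" "dom2 A (\<eta> (cod2 A \<alpha>)) = cod2 A \<alpha>"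
      using nat o unfolding cnat_iso_def by (simp_all add: hom_cat_def)
    show ?thesis by (rule K.X.cancel_l[OF e]) (use a h in simp_all)
  qed
  have full: "\<exists>\<alpha>\<in>arr2 A. fmap2 K \<alpha> = \<delta>" if a: "a \<in> arr1 A" "a' \<in> arr1 A" "\<delta> \<in> arr2 D"
      "dom2 D \<delta> = fmap1 K a" "cod2 D \<delta> = fmap1 K a'" for a a' \<delta>
  proof -
    have "fmap0 K (src1 A a) = fmap0 K (src1 A a')" using a by (metis K.F1_src K.Y.src_cod)
    hence 1: "src1 A a = src1 A a'" using inj0 a by (simp add: inj_on_def)
    have "fmap0 K (tgt1 A a) = fmap0 K (tgt1 A a')" using a by (metis K.F1_tgt K.Y.tgt_cod)
    hence 2: "tgt1 A a = tgt1 A a'" using inj0 a by (simp add: inj_on_def)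
    let ?X = "src1 A a" and ?X' = "tgt1 A a"
    let ?CA = "hom_cat A ?X ?X'" and ?CD = "hom_cat D (fmap0 K ?X) (fmap0 K ?X')"
    have X: "?X \<in> obj A" "?X' \<in> obj A" using a by simp_all
    obtain Go Ga \<eta> \<epsilon> where fG: "cfunctor ?CD ?CA Go Ga"
      and n1: "cnat_iso ?CA ?CA id id (Go \<circ> fmap1 K) (Ga \<circ> fmap2 K) \<eta>"
      and n2: "cnat_iso ?CD ?CD (fmap1 K \<circ> Go) (fmap2 K \<circ> Ga) id id \<epsilon>"
      using eqv[OF X] unfolding cequivalence_def by blast
    have oa: "a \<in> cob ?CA" "a' \<in> cob ?CA" using a 1 2 by (simp_all add: hom_cat_def)
    have dC: "\<delta> \<in> car ?CD" using a by (simp add: hom_cat_def)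
    have eta: "\<eta> b \<in> arr2 A \<and> dom2 A (\<eta> b) = b \<and> cod2 A (\<eta> b) = Go (fmap1 K b)" if "b \<in> cob ?CA" for b
      using n1 that unfolding cnat_iso_def by (simp add: hom_cat_def)
    have Gd: "Ga \<delta> \<in> arr2 A \<and> dom2 A (Ga \<delta>) = Go (fmap1 K a) \<and> cod2 A (Ga \<delta>) = Go (fmap1 K a')"
      using fG dC a unfolding cfunctor_def by (simp add: hom_cat_def)
    define \<alpha> where "\<alpha> = vcomp A (vinv A (\<eta> a')) (vcomp A (Ga \<delta>) (\<eta> a))"
    have al: "\<alpha> \<in> arr2 A" "dom2 A \<alpha> = a" "cod2 A \<alpha> = a'" using eta[OF oa(1)] eta[OF oa(2)] Gd unfolding \<alpha>_def by simp_all
    have aC: "\<alpha> \<in> car ?CA" using al a by (simp add: hom_cat_def)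
    have "vcomp A (\<eta> a') \<alpha> = vcomp A (Ga (fmap2 K \<alpha>)) (\<eta> a)"
      using bspec[OF conjunct2[OF n1[unfolded cnat_iso_def]] aC] al by (simp add: hom_cat_def)
    moreover have "vcomp A (\<eta> a') \<alpha> = vcomp A (Ga \<delta>) (\<eta> a)"
      unfolding \<alpha>_def using eta[OF oa(1)] eta[OF oa(2)] Gd by simp
    ultimately have "vcomp A (Ga (fmap2 K \<alpha>)) (\<eta> a) = vcomp A (Ga \<delta>) (\<eta> a)" by simp
    moreover have KaC: "fmap2 K \<alpha> \<in> car ?CD" using al a by (simp add: hom_cat_def)
    have GKa: "Ga (fmap2 K \<alpha>) \<in> arr2 A \<and> dom2 A (Ga (fmap2 K \<alpha>)) = Go (fmap1 K a) \<and> cod2 A (Ga (fmap2 K \<alpha>)) = Go (fmap1 K a')"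
      using fG KaC al unfolding cfunctor_def by (simp add: hom_cat_def)
    ultimately have GG: "Ga (fmap2 K \<alpha>) = Ga \<delta>"
      using K.X.cancel_r eta[OF oa(1)] Gd by (metis GKa)
    have oKa: "fmap1 K a \<in> cob ?CD" "fmap1 K a' \<in> cob ?CD" using a 1 2 by (simp_all add: hom_cat_def)
    have eps: "\<epsilon> b \<in> arr2 D \<and> dom2 D (\<epsilon> b) = fmap1 K (Go b) \<and> cod2 D (\<epsilon> b) = b" if "b \<in> cob ?CD" for b
      using n2 that unfolding cnat_iso_def by (simp add: hom_cat_def)
    have "vcomp D (\<epsilon> (fmap1 K a')) (fmap2 K (Ga (fmap2 K \<alpha>))) = vcomp D (fmap2 K \<alpha>) (\<epsilon> (fmap1 K a))"
      using bspec[OF conjunct2[OF n2[unfolded cnat_iso_def]] KaC] al by (simp add: hom_cat_def)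
    moreover have "vcomp D (\<epsilon> (fmap1 K a')) (fmap2 K (Ga \<delta>)) = vcomp D \<delta> (\<epsilon> (fmap1 K a))"
      using bspec[OF conjunct2[OF n2[unfolded cnat_iso_def]] dC] a by (simp add: hom_cat_def)
    ultimately have "vcomp D (fmap2 K \<alpha>) (\<epsilon> (fmap1 K a)) = vcomp D \<delta> (\<epsilon> (fmap1 K a))" using GG by simp
    hence "fmap2 K \<alpha> = \<delta>"
      using K.Y.cancel_r eps[OF oKa(1)] al a by (metis K.F2_arr K.F2_dom)
    thus ?thesis using al by blast
  qed
  have ess: "\<exists>a\<in>arr1 A. \<exists>\<epsilon>\<in>arr2 D. dom2 D \<epsilon> = d \<and> cod2 D \<epsilon> = fmap1 K a" if d: "d \<in> arr1 D" for d
  proof -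
    obtain X where X: "X \<in> obj A" "fmap0 K X = src1 D d" using s d by (metis K.Y.src_obj imageE)
    obtain X' where X': "X' \<in> obj A" "fmap0 K X' = tgt1 D d" using s d by (metis K.Y.tgt_obj imageE)
    let ?CA = "hom_cat A X X'" and ?CD = "hom_cat D (fmap0 K X) (fmap0 K X')"
    obtain Go Ga \<eta> \<epsilon> where fG: "cfunctor ?CD ?CA Go Ga"
      and n2: "cnat_iso ?CD ?CD (fmap1 K \<circ> Go) (fmap2 K \<circ> Ga) id id \<epsilon>"
      using eqv[OF X(1) X'(1)] unfolding cequivalence_def by blast
    have dC: "d \<in> cob ?CD" using d X X' by (simp add: hom_cat_def)
    have "Go d \<in> cob ?CA" using fG dC unfolding cfunctor_def by blast
    hence Go: "Go d \<in> arr1 A" by (simp add: hom_cat_def)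
    have e: "\<epsilon> d \<in> arr2 D \<and> dom2 D (\<epsilon> d) = fmap1 K (Go d) \<and> cod2 D (\<epsilon> d) = d"
      using n2 dC unfolding cnat_iso_def by (simp add: hom_cat_def)
    show ?thesis using Go e by (intro bexI[of _ "Go d"] bexI[of _ "vinv D (\<epsilon> d)"]) simp_all
  qed
  show ?thesis
    by (unfold_locales) (use inj0 s inj1 faith full ess in auto)
qed

theorem lemma5p5:
  fixes A :: "('oa,'aa,'ca) bigroupoid"
    and B :: "('ob,'ab,'cb) bigroupoid"
    and C :: "('oc,'ac,'cc) bigroupoid"
    and D :: "('od,'ad,'cd) bigroupoid"
    and F :: "('oa,'aa,'ca,'ob,'ab,'cb) bimorph"
    and K :: "('oa,'aa,'ca,'od,'ad,'cd) bimorph"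
    and G :: "('ob,'ab,'cb,'oc,'ac,'cc) bimorph"
    and H :: "('od,'ad,'cd,'oc,'ac,'cc) bimorph"
  assumes "bimorphism A B F" and "bimorphism A D K"
    and "bimorphism B C G" and "bimorphism D C H"
    and "bm_eq A (bm_comp C G F) (bm_comp C H K)"
    and "trivial_cofibration A D K"
    and "fmap0 K ` obj A = obj D"
    and "fibration B C G"
  shows "\<exists>L :: ('od,'ad,'cd,'ob,'ab,'cb) bimorph.
           bimorphism D B L \<and>
           bm_eq A (bm_comp B L K) F \<and>
           bm_eq D (bm_comp C G L) H"
proof -
  interpret F: bm A B F by (rule bm.intro) (rule assms(1))
  interpret G: bm B C G by (rule bm.intro) (rule assms(3))
  interpret H: bm D C H by (rule bm.intro) (rule assms(4))
  interpret K: pinv A D K by (rule pinv_intro) (use assms in auto)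
  have eq: "bm_eq A (bm_comp C G F) (bm_comp C H K)" by (rule assms(5))
  have e0[simp]: "x \<in> obj A \<Longrightarrow> fmap0 G (fmap0 F x) = fmap0 H (fmap0 K x)" for x
    using eq unfolding bm_eq_def bm_comp_def by simp
  have e1[simp]: "a \<in> arr1 A \<Longrightarrow> fmap1 G (fmap1 F a) = fmap1 H (fmap1 K a)" for a
    using eq unfolding bm_eq_def bm_comp_def by simp
  have e2[simp]: "\<alpha> \<in> arr2 A \<Longrightarrow> fmap2 G (fmap2 F \<alpha>) = fmap2 H (fmap2 K \<alpha>)" for \<alpha>
    using eq unfolding bm_eq_def bm_comp_def by simp
  have ecmp: "f \<in> arr1 A \<Longrightarrow> g \<in> arr1 A \<Longrightarrow> src1 A g = tgt1 A f \<Longrightarrow>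
     vcomp C (fmap2 G (fcmp F g f)) (fcmp G (fmap1 F g) (fmap1 F f)) = vcomp C (fmap2 H (fcmp K g f)) (fcmp H (fmap1 K g) (fmap1 K f))" for f g
    using eq unfolding bm_eq_def bm_comp_def by simp
  have eunit: "x \<in> obj A \<Longrightarrow>
     vcomp C (fmap2 G (funit F x)) (funit G (fmap0 F x)) = vcomp C (fmap2 H (funit K x)) (funit H (fmap0 K x))" for x
    using eq unfolding bm_eq_def bm_comp_def by simp
  have einv: "a \<in> arr1 A \<Longrightarrow>
     vcomp C (fmap2 G (finv F a)) (finv G (fmap1 F a)) = vcomp C (fmap2 H (finv K a)) (finv H (fmap1 K a))" for a
    using eq unfolding bm_eq_def bm_comp_def by simp
  interpret J: bm D A K.JJ by (rule bm.intro) (rule K.J_bm)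
  interpret NC: bmc D A B K.JJ F by unfold_locales
  define N where "N = bm_comp B F K.JJ"
  have N: "bimorphism D B N" unfolding N_def by (rule NC.comp_bm)
  define bet where "bet d = (if d \<in> fmap1 K ` arr1 A then vid B (fmap1 F (K.rr d)) else
     (SOME \<beta>. \<beta> \<in> arr2 B \<and> cod2 B \<beta> = fmap1 F (K.rr d) \<and> fmap1 G (dom2 B \<beta>) = fmap1 H d \<and> fmap2 G \<beta> = fmap2 H (K.ee d)))" for d
  have bet: "bet d \<in> arr2 B \<and> cod2 B (bet d) = fmap1 F (K.rr d) \<and> fmap1 G (dom2 B (bet d)) = fmap1 H d \<and> fmap2 G (bet d) = fmap2 H (K.ee d)"
    if d: "d \<in> arr1 D" for d
  proof (cases "d \<in> fmap1 K ` arr1 A")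
    case True
    then obtain a where a: "a \<in> arr1 A" "d = fmap1 K a" by blast
    thus ?thesis unfolding bet_def by simp
  next
    case False
    have "\<exists>\<alpha>\<in>arr2 B. cod2 B \<alpha> = fmap1 F (K.rr d) \<and> fmap1 G (dom2 B \<alpha>) = dom2 C (fmap2 H (K.ee d)) \<and> fmap2 G \<alpha> = fmap2 H (K.ee d)"
    proof -
      have fib: "\<forall>a'\<in>arr1 B. \<forall>\<beta>\<in>arr2 C. cod2 C \<beta> = fmap1 G a' \<longrightarrow>
        (\<exists>\<alpha>\<in>arr2 B. cod2 B \<alpha> = a' \<and> fmap1 G (dom2 B \<alpha>) = dom2 C \<beta> \<and> fmap2 G \<alpha> = \<beta>)"
        using assms(8) unfolding fibration_def by blast
      show ?thesis by (rule fib[rule_format]) (use d in simp_all)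
    qed
    hence "\<exists>\<beta>. \<beta> \<in> arr2 B \<and> cod2 B \<beta> = fmap1 F (K.rr d) \<and> fmap1 G (dom2 B \<beta>) = fmap1 H d \<and> fmap2 G \<beta> = fmap2 H (K.ee d)"
      using d by auto
    from someI_ex[OF this] show ?thesis unfolding bet_def using False by simp
  qed
  have bet_K: "bet (fmap1 K a) = vid B (fmap1 F a)" if "a \<in> arr1 A" for a
    unfolding bet_def using that by simp
  interpret T: bmt D B N bet
    apply (rule bmt.intro) apply (rule bm.intro) apply (rule N)
    apply unfold_locales using bet by (simp_all add: N_def bm_comp_def)
  define L where "L = transport D B N bet"
  have L: "bimorphism D B L" unfolding L_def by (rule T.tr_bm)
  have Ns[simp]: "fmap0 N = fmap0 F \<circ> K.J0" "fmap1 N = fmap1 F \<circ> K.rr" "fmap2 N = fmap2 F \<circ> fmap2 K.JJ"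
    "fcmp N g f = vcomp B (fmap2 F (fcmp K.JJ g f)) (fcmp F (K.rr g) (K.rr f))"
    "funit N y = vcomp B (fmap2 F (funit K.JJ y)) (funit F (K.J0 y))"
    "finv N f = vcomp B (fmap2 F (finv K.JJ f)) (finv F (K.rr f))" for g f y
    unfolding N_def bm_comp_def by (simp_all del: K.JJ_simps(3-6))
  have Ls[simp]: "fmap0 L = fmap0 N" "fmap1 L d = dom2 B (bet d)"
    "fmap2 L \<delta> = vcomp B (vinv B (bet (cod2 D \<delta>))) (vcomp B (fmap2 N \<delta>) (bet (dom2 D \<delta>)))"
    "fcmp L g f = vcomp B (vinv B (bet (hcomp1 D g f))) (vcomp B (fcmp N g f) (hcomp2 B (bet g) (bet f)))"
    "funit L y = vcomp B (vinv B (bet (unit1 D y))) (funit N y)"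
    "finv L f = vcomp B (vinv B (bet (inv1 D f))) (vcomp B (finv N f) (inv2 B (bet f)))" for d \<delta> g f y
    unfolding L_def transport_def by simp_all
  have bG[simp]: "d \<in> arr1 D \<Longrightarrow> fmap2 G (bet d) = fmap2 H (K.ee d)" for d using bet by blast
  have bGd[simp]: "d \<in> arr1 D \<Longrightarrow> fmap1 G (dom2 B (bet d)) = fmap1 H d" for d using bet by blast
  have eqA: "bm_eq A (bm_comp B L K) F"
    unfolding bm_eq_def
  proof (intro conjI ballI impI)
    fix x assume x: "x \<in> obj A"
    show "fmap0 (bm_comp B L K) x = fmap0 F x" using x by (simp add: bm_comp_def)
    have h: "vcomp B (fmap2 F (fmap2 K.JJ (funit K x))) (fmap2 F (funit K.JJ (fmap0 K x))) = vid B (fmap1 F (unit1 A x))"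
    proof -
      have "fmap2 F (vcomp A (fmap2 K.JJ (funit K x)) (funit K.JJ (fmap0 K x))) = fmap2 F (vid A (unit1 A x))"
        by (simp only: K.JK_unit[OF x])
      thus ?thesis using x by (simp del: K.JJ_simps(3-6))
    qed
    show "funit (bm_comp B L K) x = funit F x"
      using x by (simp add: bm_comp_def bet_K F.Y.tail[OF h] del: K.JJ_simps(3-6))
  next
    fix a assume a: "a \<in> arr1 A"
    show "fmap1 (bm_comp B L K) a = fmap1 F a" using a by (simp add: bm_comp_def bet_K)
    have h: "vcomp B (fmap2 F (fmap2 K.JJ (finv K a))) (fmap2 F (finv K.JJ (fmap1 K a))) = vid B (fmap1 F (inv1 A a))"
    proof -
      have "fmap2 F (vcomp A (fmap2 K.JJ (finv K a)) (finv K.JJ (fmap1 K a))) = fmap2 F (vid A (inv1 A a))"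
        by (simp only: K.JK_inv[OF a])
      thus ?thesis using a by (simp del: K.JJ_simps(3-6))
    qed
    show "finv (bm_comp B L K) a = finv F a"
      using a by (simp add: bm_comp_def bet_K F.Y.tail[OF h] del: K.JJ_simps(3-6))
  next
    fix \<alpha> assume a: "\<alpha> \<in> arr2 A"
    show "fmap2 (bm_comp B L K) \<alpha> = fmap2 F \<alpha>" using a by (simp add: bm_comp_def bet_K)
  next
    fix f g assume f: "f \<in> arr1 A" and g: "g \<in> arr1 A" and gf: "src1 A g = tgt1 A f"
    have h: "vcomp B (fmap2 F (fmap2 K.JJ (fcmp K g f))) (fmap2 F (fcmp K.JJ (fmap1 K g) (fmap1 K f))) = vid B (fmap1 F (hcomp1 A g f))"
    proof -
      have "fmap2 F (vcomp A (fmap2 K.JJ (fcmp K g f)) (fcmp K.JJ (fmap1 K g) (fmap1 K f))) = fmap2 F (vid A (hcomp1 A g f))"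
        by (simp only: K.JK_cmp[OF f g gf])
      thus ?thesis using f g gf by (simp del: K.JJ_simps(3-6))
    qed
    show "fcmp (bm_comp B L K) g f = fcmp F g f"
      using f g gf by (simp add: bm_comp_def bet_K F.Y.tail[OF h] del: K.JJ_simps(3-6))
  qed
  have eqD: "bm_eq D (bm_comp C G L) H"
    unfolding bm_eq_def
  proof (intro conjI ballI impI)
    fix y assume y: "y \<in> obj D"
    show "fmap0 (bm_comp C G L) y = fmap0 H y"
    proof -
      have "fmap0 G (fmap0 F (K.J0 y)) = fmap0 H (fmap0 K (K.J0 y))" using y by simp
      thus ?thesis using y by (simp add: bm_comp_def)
    qed
    show "funit (bm_comp C G L) y = funit H y"
      using y eunit[of "K.J0 y"] by (simp add: bm_comp_def)
  next
    fix d assume d: "d \<in> arr1 D"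
    show "fmap1 (bm_comp C G L) d = fmap1 H d" using d by (simp add: bm_comp_def)
    show "finv (bm_comp C G L) d = finv H d"
      using d G.Y.tail[OF einv[of "K.rr d"]] G.inv_nat[of "bet d", symmetric]
        G.Y.tail[OF H.inv_nat[of "vinv D (K.ee d)", symmetric]]
      by (simp add: bm_comp_def G.Y.vinv_inv2[symmetric])
  next
    fix \<delta> assume a: "\<delta> \<in> arr2 D"
    show "fmap2 (bm_comp C G L) \<delta> = fmap2 H \<delta>" using a by (simp add: bm_comp_def)
  next
    fix f g assume f: "f \<in> arr1 D" and g: "g \<in> arr1 D" and gf: "src1 D g = tgt1 D f"
    show "fcmp (bm_comp C G L) g f = fcmp H g f"
      using f g gf G.cmp_nat[of "bet f" "bet g", symmetric] G.Y.tail[OF ecmp[of "K.rr f" "K.rr g"]]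
        G.Y.tail[OF H.cmp_nat[of "vinv D (K.ee f)" "vinv D (K.ee g)", symmetric]]
      by (simp add: bm_comp_def G.Y.interchange[symmetric])
  qed
  show ?thesis using L eqA eqD by blast
qed


end
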